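(* Let $F$ be a finite field of characteristic $3$. Let $k\ge 0$ be an integer, $m=3k+1$, and $t$ an integer with $t^3\equiv 1\pmod m$ and $\gcd(m,t-1)=1$. Let $G=T_{3m}=\langle x,y\mid x^m=y^3=1,\ y^{-1}xy=x^t\rangle$ (of order $3m$) and $FG$ its group algebra. Let $s\in FG$ be the sum of all elements of $G$ whose order is a power of $3$ (including the identity), and $\mathrm{Anh}(s)=\{\alpha\in FG\mid \alpha s=s\alpha=0\}$. Then $\dim_F J(FG)=\dim_F \mathrm{Anh}(s)=2$.
   Context: $J(FG)$ denotes the Jacobson radical of $FG$. *)

theory Defs
  imports "HOL-Algebra.Algebra" "HOL-Number_Theory.Cong" "HOL-Library.Function_Algebras"
begin

definition left_ideal :: "('r, 'm) ring_scheme \<Rightarrow> 'r set \<Rightarrow> bool" where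
  "left_ideal R I \<longleftrightarrow> additive_subgroup I R \<and>
     (\<forall>r\<in>carrier R. \<forall>a\<in>I. r \<otimes>\<^bsub>R\<^esub> a \<in> I)"

definition maximal_left_ideal :: "('r, 'm) ring_scheme \<Rightarrow> 'r set \<Rightarrow> bool" where
  "maximal_left_ideal R I \<longleftrightarrow> left_ideal R I \<and> I \<noteq> carrier R \<and>
     (\<forall>K. left_ideal R K \<and> I \<subseteq> K \<longrightarrow> K = I \<or> K = carrier R)"

definition jacobson_radical :: "('r, 'm) ring_scheme \<Rightarrow> 'r set" where
  "jacobson_radical R = carrier R \<inter> \<Inter>{I. maximal_left_ideal R I}"

definition group_algebra :: "('g, 'n) monoid_scheme \<Rightarrow> ('g \<Rightarrow> 'a::field) ring" where
  "group_algebra G =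
     \<lparr> partial_object.carrier = {f. \<forall>z. z \<notin> carrier G \<longrightarrow> f z = 0},
       monoid.mult = (\<lambda>f h z. if z \<in> carrier G
                        then (\<Sum>u\<in>carrier G. f u * h (inv\<^bsub>G\<^esub> u \<otimes>\<^bsub>G\<^esub> z)) else 0),
       monoid.one = (\<lambda>z. if z = \<one>\<^bsub>G\<^esub> then 1 else 0),
       ring.zero = (\<lambda>z. 0),
       ring.add = (\<lambda>f h z. f z + h z) \<rparr>"

definition ga_scale :: "'a::field \<Rightarrow> ('g \<Rightarrow> 'a) \<Rightarrow> ('g \<Rightarrow> 'a)" where
  "ga_scale c f = (\<lambda>z. c * f z)"

definition dim_F :: "('g \<Rightarrow> 'a::field) set \<Rightarrow> nat" where
  "dim_F S = vector_space.dim ga_scale S"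

definition s_elem :: "('g, 'n) monoid_scheme \<Rightarrow> 'g \<Rightarrow> 'a::field" where
  "s_elem G = (\<lambda>z. if z \<in> carrier G \<and> (\<exists>n::nat. group.ord G z = 3 ^ n) then 1 else 0)"

definition Anh :: "('g, 'n) monoid_scheme \<Rightarrow> ('g \<Rightarrow> 'a::field) \<Rightarrow> ('g \<Rightarrow> 'a) set" where
  "Anh G a = {\<alpha> \<in> carrier (group_algebra G).
      \<alpha> \<otimes>\<^bsub>group_algebra G\<^esub> a = \<zero>\<^bsub>group_algebra G\<^esub> \<and>
      a \<otimes>\<^bsub>group_algebra G\<^esub> \<alpha> = \<zero>\<^bsub>group_algebra G\<^esub>}"

end

theory Submission
  imports Defs
begin


definition GA :: "('g, 'n) monoid_scheme \<Rightarrow> ('g \<Rightarrow> 'a::field) set" where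
  "GA G = {f. \<forall>z. z \<notin> carrier G \<longrightarrow> f z = 0}"

definition cv :: "('g, 'n) monoid_scheme \<Rightarrow> ('g \<Rightarrow> 'a::field) \<Rightarrow> ('g \<Rightarrow> 'a) \<Rightarrow> 'g \<Rightarrow> 'a" where
  "cv G f h = (\<lambda>z. if z \<in> carrier G then (\<Sum>u\<in>carrier G. f u * h (inv\<^bsub>G\<^esub> u \<otimes>\<^bsub>G\<^esub> z)) else 0)"

definition dl :: "('g, 'n) monoid_scheme \<Rightarrow> 'g \<Rightarrow> 'g \<Rightarrow> 'a::field" where
  "dl G g = (\<lambda>z. if z = g then 1 else 0)"

lemma ga_carrier: "carrier (group_algebra G) = GA G"
  by (simp add: group_algebra_def GA_def)
lemma ga_mult: "monoid.mult (group_algebra G) = cv G"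
  by (simp add: group_algebra_def cv_def fun_eq_iff)
lemma ga_add: "ring.add (group_algebra G) = (+)"
  by (simp add: group_algebra_def fun_eq_iff)
lemma ga_zero: "ring.zero (group_algebra G) = 0"
  by (simp add: group_algebra_def fun_eq_iff)
lemma ga_one: "monoid.one (group_algebra G) = dl G \<one>\<^bsub>G\<^esub>"
  by (simp add: group_algebra_def dl_def fun_eq_iff)

lemmas ga_simps = ga_carrier ga_mult ga_add ga_zero ga_one

locale fgrp = group G for G :: "('g, 'n) monoid_scheme" (structure) +
  assumes fin: "finite (carrier G)"
begin

lemma GA_iff: "f \<in> GA G \<longleftrightarrow> (\<forall>z. z \<notin> carrier G \<longrightarrow> f z = 0)"
  by (simp add: GA_def)

lemma cv_app: "z \<in> carrier G \<Longrightarrow> cv G f h z = (\<Sum>u\<in>carrier G. f u * h (inv u \<otimes> z))"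
  by (simp add: cv_def)
lemma cv_out: "z \<notin> carrier G \<Longrightarrow> cv G f h z = 0"
  by (simp add: cv_def)
lemma cv_GA[simp]: "cv G f h \<in> GA G"
  by (simp add: GA_def cv_def)

lemma bij_lmult: "a \<in> carrier G \<Longrightarrow> bij_betw (\<lambda>w. a \<otimes> w) (carrier G) (carrier G)"
  by (rule bij_betwI[where g="\<lambda>u. inv a \<otimes> u"]) (simp_all add: m_assoc[symmetric])
lemma bij_rmult: "a \<in> carrier G \<Longrightarrow> bij_betw (\<lambda>w. w \<otimes> a) (carrier G) (carrier G)"
  by (rule bij_betwI[where g="\<lambda>u. u \<otimes> inv a"]) (simp_all add: m_assoc)
lemma bij_invl: "z \<in> carrier G \<Longrightarrow> bij_betw (\<lambda>w. inv w \<otimes> z) (carrier G) (carrier G)"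
  apply (rule bij_betwI[where g="\<lambda>u. z \<otimes> inv u"])
  apply (simp_all add: inv_mult_group m_assoc)
  by (simp add: m_assoc[symmetric])

lemma sum_lmult: "a \<in> carrier G \<Longrightarrow> (\<Sum>w\<in>carrier G. f (a \<otimes> w)) = (\<Sum>w\<in>carrier G. f w)"
  by (rule sum.reindex_bij_betw[OF bij_lmult])
lemma sum_rmult: "a \<in> carrier G \<Longrightarrow> (\<Sum>w\<in>carrier G. f (w \<otimes> a)) = (\<Sum>w\<in>carrier G. f w)"
  by (rule sum.reindex_bij_betw[OF bij_rmult])
lemma sum_invl: "z \<in> carrier G \<Longrightarrow> (\<Sum>w\<in>carrier G. f (inv w \<otimes> z)) = (\<Sum>w\<in>carrier G. f w)"
  by (rule sum.reindex_bij_betw[OF bij_invl])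

lemma cv_assoc: "cv G (cv G f h) k = cv G f (cv G h k)"
proof
  fix z show "cv G (cv G f h) k z = cv G f (cv G h k) z"
  proof (cases "z \<in> carrier G")
    case False then show ?thesis by (simp add: cv_out)
  next
    case z: True
    have "cv G (cv G f h) k z = (\<Sum>u\<in>carrier G. (\<Sum>v\<in>carrier G. f v * h (inv v \<otimes> u)) * k (inv u \<otimes> z))"
      using z by (simp add: cv_app)
    also have "\<dots> = (\<Sum>v\<in>carrier G. f v * (\<Sum>u\<in>carrier G. h (inv v \<otimes> u) * k (inv u \<otimes> z)))"
      unfolding sum_distrib_right sum_distrib_left mult.assoc by (rule sum.swap)
    also have "\<dots> = (\<Sum>v\<in>carrier G. f v * (\<Sum>w\<in>carrier G. h w * k (inv w \<otimes> (inv v \<otimes> z))))"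
    proof (rule sum.cong[OF refl])
      fix v assume v: "v \<in> carrier G"
      have "(\<Sum>u\<in>carrier G. h (inv v \<otimes> u) * k (inv u \<otimes> z)) =
            (\<Sum>w\<in>carrier G. h (inv v \<otimes> (v \<otimes> w)) * k (inv (v \<otimes> w) \<otimes> z))"
        using sum_lmult[OF v, of "\<lambda>u. h (inv v \<otimes> u) * k (inv u \<otimes> z)"] by simp
      also have "\<dots> = (\<Sum>w\<in>carrier G. h w * k (inv w \<otimes> (inv v \<otimes> z)))"
        using v z by (intro sum.cong refl) (simp add: inv_mult_group m_assoc[symmetric])
      finally show "f v * (\<Sum>u\<in>carrier G. h (inv v \<otimes> u) * k (inv u \<otimes> z)) =
          f v * (\<Sum>w\<in>carrier G. h w * k (inv w \<otimes> (inv v \<otimes> z)))" by simp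
    qed
    also have "\<dots> = cv G f (cv G h k) z"
      using z by (simp add: cv_app)
    finally show ?thesis .
  qed
qed

lemma cv_add_left: "cv G (f + g) h = cv G f h + cv G g h"
  by (simp add: cv_def fun_eq_iff distrib_right sum.distrib)
lemma cv_add_right: "cv G h (f + g) = cv G h f + cv G h g"
  by (simp add: cv_def fun_eq_iff distrib_left sum.distrib)
lemma cv_diff_left: "cv G (f - g) h = cv G f h - cv G g h"
  by (simp add: cv_def fun_eq_iff left_diff_distrib sum_subtractf)
lemma cv_diff_right: "cv G h (f - g) = cv G h f - cv G h g"
  by (simp add: cv_def fun_eq_iff right_diff_distrib sum_subtractf)
lemma cv_neg_left: "cv G (- f) h = - cv G f h"
  by (simp add: cv_def fun_eq_iff sum_negf)
lemma cv_neg_right: "cv G h (- f) = - cv G h f"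
  by (simp add: cv_def fun_eq_iff sum_negf)
lemma cv_zero_left[simp]: "cv G 0 h = 0"
  by (simp add: cv_def fun_eq_iff)
lemma cv_zero_right[simp]: "cv G h 0 = 0"
  by (simp add: cv_def fun_eq_iff)
lemma cv_scale_left: "cv G (ga_scale c f) h = ga_scale c (cv G f h)"
  by (simp add: cv_def fun_eq_iff ga_scale_def sum_distrib_left mult.assoc)
lemma cv_scale_right: "cv G h (ga_scale c f) = ga_scale c (cv G h f)"
  by (simp add: cv_def fun_eq_iff ga_scale_def sum_distrib_left mult.left_commute)
lemma cv_sum_left: "cv G (\<Sum>i\<in>I. f i) h = (\<Sum>i\<in>I. cv G (f i) h)"
proof (induction I rule: infinite_finite_induct)
  case (insert x F)
  show ?case
    by (simp only: sum.insert[OF insert(1,2)] cv_add_left insert.IH)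
next
  case (infinite A) then show ?case by (simp only: sum.infinite cv_zero_left cv_zero_right not_False_eq_True)
next
  case empty show ?case by (simp only: sum.empty cv_zero_left cv_zero_right)
qed
lemma cv_sum_right: "cv G h (\<Sum>i\<in>I. f i) = (\<Sum>i\<in>I. cv G h (f i))"
proof (induction I rule: infinite_finite_induct)
  case (insert x F)
  show ?case
    by (simp only: sum.insert[OF insert(1,2)] cv_add_right insert.IH)
next
  case (infinite A) then show ?case by (simp only: sum.infinite cv_zero_left cv_zero_right not_False_eq_True)
next
  case empty show ?case by (simp only: sum.empty cv_zero_left cv_zero_right)
qed

lemma dl_GA[simp]: "g \<in> carrier G \<Longrightarrow> dl G g \<in> GA G"
  by (simp add: GA_def dl_def)

lemma sum_dl: "(\<Sum>u\<in>carrier G. f u * dl G g u) = (if g \<in> carrier G then f g else 0)"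
proof -
  have "(\<Sum>u\<in>carrier G. f u * dl G g u) = (\<Sum>u\<in>carrier G. if u = g then f u else 0)"
    by (rule sum.cong) (auto simp: dl_def)
  then show ?thesis using fin by simp
qed
lemma sum_dl': "(\<Sum>u\<in>carrier G. dl G g u * f u) = (if g \<in> carrier G then f g else 0)"
  using sum_dl[of f g] by (simp add: mult.commute)

lemma cv_dl_left: "g \<in> carrier G \<Longrightarrow> cv G (dl G g) f = (\<lambda>z. if z \<in> carrier G then f (inv g \<otimes> z) else 0)"
  by (simp add: cv_def fun_eq_iff sum_dl')

lemma cv_dl_right: "g \<in> carrier G \<Longrightarrow> cv G f (dl G g) = (\<lambda>z. if z \<in> carrier G then f (z \<otimes> inv g) else 0)"
proof (rule ext)
  fix z assume g: "g \<in> carrier G"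
  show "cv G f (dl G g) z = (if z \<in> carrier G then f (z \<otimes> inv g) else 0)"
  proof (cases "z \<in> carrier G")
    case True
    have eq: "\<And>u. u \<in> carrier G \<Longrightarrow> dl G g (inv u \<otimes> z) = dl G (z \<otimes> inv g) u"
    proof -
      fix u assume u: "u \<in> carrier G"
      have "(inv u \<otimes> z = g) \<longleftrightarrow> (u = z \<otimes> inv g)"
        using u g True
        by (metis inv_solve_left inv_solve_right inv_closed m_closed)
      then show "dl G g (inv u \<otimes> z) = dl G (z \<otimes> inv g) u" by (simp add: dl_def)
    qed
    have "cv G f (dl G g) z = (\<Sum>u\<in>carrier G. f u * dl G (z \<otimes> inv g) u)"
      unfolding cv_app[OF True] by (rule sum.cong) (simp_all add: eq)
    then have "cv G f (dl G g) z = (\<Sum>u\<in>carrier G. f u * dl G (z \<otimes> inv g) u)"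
      using True by (simp add: cv_app)
    then show ?thesis using True g by (simp add: sum_dl)
  qed (simp add: cv_out)
qed

lemma cv_one_left: "f \<in> GA G \<Longrightarrow> cv G (dl G \<one>) f = f"
  by (auto simp: cv_dl_left fun_eq_iff GA_def)
lemma cv_one_right: "f \<in> GA G \<Longrightarrow> cv G f (dl G \<one>) = f"
  by (auto simp: cv_dl_right fun_eq_iff GA_def)

lemma cv_dl_dl: "g \<in> carrier G \<Longrightarrow> h \<in> carrier G \<Longrightarrow> cv G (dl G g) (dl G h) = dl G (g \<otimes> h)"
proof -
  assume g: "g \<in> carrier G" and h: "h \<in> carrier G"
  have "\<And>z. z \<in> carrier G \<Longrightarrow> (inv g \<otimes> z = h) = (z = g \<otimes> h)"
    using inv_solve_left[of h g] g h by (auto simp: m_assoc[symmetric])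
  then show ?thesis unfolding cv_dl_left[OF g] using g h by (auto simp: fun_eq_iff dl_def)
qed

lemma sum_fun_app: "(\<Sum>i\<in>I. f i) z = (\<Sum>i\<in>I. f i z)"
  by (induction I rule: infinite_finite_induct) auto

lemma GA_add[simp]: "f \<in> GA G \<Longrightarrow> g \<in> GA G \<Longrightarrow> f + g \<in> GA G"
  by (simp add: GA_def)
lemma GA_diff[simp]: "f \<in> GA G \<Longrightarrow> g \<in> GA G \<Longrightarrow> f - g \<in> GA G"
  by (simp add: GA_def)
lemma GA_neg[simp]: "f \<in> GA G \<Longrightarrow> - f \<in> GA G"
  by (simp add: GA_def)
lemma GA_zero[simp]: "0 \<in> GA G"
  by (simp add: GA_def)
lemma GA_scale[simp]: "f \<in> GA G \<Longrightarrow> ga_scale c f \<in> GA G"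
  by (simp add: GA_def ga_scale_def)
lemma GA_sum[simp]: "(\<And>i. i \<in> I \<Longrightarrow> f i \<in> GA G) \<Longrightarrow> (\<Sum>i\<in>I. f i) \<in> GA G"
  by (induction I rule: infinite_finite_induct) auto

lemma expand: "f \<in> GA G \<Longrightarrow> f = (\<Sum>h\<in>carrier G. ga_scale (f h) (dl G h))"
proof (rule ext)
  fix z assume f: "f \<in> GA G"
  have "(\<Sum>h\<in>carrier G. ga_scale (f h) (dl G h)) z = (\<Sum>h\<in>carrier G. f h * dl G h z)"
    by (simp add: ga_scale_def sum_fun_app)
  also have "\<dots> = (\<Sum>h\<in>carrier G. f h * dl G z h)"
    by (intro sum.cong) (auto simp: dl_def)
  also have "\<dots> = f z" using f by (simp add: sum_dl GA_def)
  finally show "f z = (\<Sum>h\<in>carrier G. ga_scale (f h) (dl G h)) z" by simp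
qed

lemma scale_as_cv: "f \<in> GA G \<Longrightarrow> ga_scale c f = cv G (ga_scale c (dl G \<one>)) f"
  by (simp add: cv_scale_left cv_one_left)

lemma ga_ring: "ring (group_algebra G :: ('g \<Rightarrow> 'a::field) ring)"
proof (rule ringI)
  show "abelian_group (group_algebra G :: ('g \<Rightarrow> 'a) ring)"
    apply (rule abelian_groupI)
    apply (auto simp: ga_simps add.assoc add.commute)
    by (metis GA_neg add.commute right_minus)
  show "monoid (group_algebra G :: ('g \<Rightarrow> 'a) ring)"
    by (rule monoidI) (auto simp: ga_simps cv_assoc cv_one_left cv_one_right)
qed (auto simp: ga_simps cv_add_left cv_add_right)

lemma ga_ainv: "f \<in> GA G \<Longrightarrow> a_inv (group_algebra G) f = (- f :: 'g \<Rightarrow> 'a::field)"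
proof -
  interpret R: ring "group_algebra G :: ('g \<Rightarrow> 'a) ring" by (rule ga_ring)
  assume f: "f \<in> GA G"
  show ?thesis
    by (rule R.minus_equality) (use f in \<open>auto simp: ga_simps\<close>)
qed

lemma left_idealI:
  assumes "K \<subseteq> GA G" "0 \<in> K" "\<And>a b. a \<in> K \<Longrightarrow> b \<in> K \<Longrightarrow> a + b \<in> K"
    "\<And>a. a \<in> K \<Longrightarrow> - a \<in> K" "\<And>r a. r \<in> GA G \<Longrightarrow> a \<in> K \<Longrightarrow> cv G r a \<in> K"
  shows "left_ideal (group_algebra G :: ('g \<Rightarrow> 'a::field) ring) K"
proof -
  interpret R: ring "group_algebra G :: ('g \<Rightarrow> 'a) ring" by (rule ga_ring)
  have inv: "a_inv (group_algebra G :: ('g \<Rightarrow> 'a) ring) a \<in> K" if "a \<in> K" for a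
  proof -
    have "a \<in> GA G" using that assms(1) by auto
    then have "a_inv (group_algebra G :: ('g \<Rightarrow> 'a) ring) a = - a" by (rule ga_ainv)
    then show ?thesis using assms(4)[OF that] by simp
  qed
  have "subgroup K (add_monoid (group_algebra G :: ('g \<Rightarrow> 'a) ring))"
    apply (rule R.add.subgroupI)
    using assms(1,2,3) inv by (auto simp: ga_simps)
  then show ?thesis
    unfolding left_ideal_def using assms(5) by (auto simp: additive_subgroup_def ga_simps)
qed

lemma left_idealD:
  assumes "left_ideal (group_algebra G :: ('g \<Rightarrow> 'a::field) ring) K"
  shows "K \<subseteq> GA G" "0 \<in> K" "\<And>a b. a \<in> K \<Longrightarrow> b \<in> K \<Longrightarrow> a + b \<in> K"
    "\<And>a. a \<in> K \<Longrightarrow> - a \<in> K" "\<And>r a. r \<in> GA G \<Longrightarrow> a \<in> K \<Longrightarrow> cv G r a \<in> K"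
proof -
  have A: "additive_subgroup K (group_algebra G :: ('g \<Rightarrow> 'a::field) ring)"
    and B: "\<And>r a. r \<in> GA G \<Longrightarrow> a \<in> K \<Longrightarrow> cv G r a \<in> K"
    using assms by (auto simp: left_ideal_def ga_simps)
  show "K \<subseteq> GA G" using additive_subgroup.a_subset[OF A] by (simp add: ga_simps)
  show "0 \<in> K" using additive_subgroup.zero_closed[OF A] by (simp add: ga_simps)
  show "\<And>a b. a \<in> K \<Longrightarrow> b \<in> K \<Longrightarrow> a + b \<in> K"
    using additive_subgroup.a_closed[OF A] by (simp add: ga_simps)
  show "\<And>a. a \<in> K \<Longrightarrow> - a \<in> K"
  proof -
    fix a assume a: "a \<in> K"
    then have "a \<in> GA G" using additive_subgroup.a_subset[OF A] by (auto simp: ga_simps)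
    then have "a_inv (group_algebra G :: ('g \<Rightarrow> 'a) ring) a = - a" by (rule ga_ainv)
    then show "- a \<in> K" using additive_subgroup.a_inv_closed[OF A a] by simp
  qed
  show "\<And>r a. r \<in> GA G \<Longrightarrow> a \<in> K \<Longrightarrow> cv G r a \<in> K" by (rule B)
qed

end


context fgrp begin

abbreviation "AG \<equiv> (group_algebra G :: ('g \<Rightarrow> 'a::field) ring)"

lemma finite_GA: "finite (UNIV :: 'a::field set) \<Longrightarrow> finite (GA G :: ('g \<Rightarrow> 'a) set)"
proof -
  assume F: "finite (UNIV :: 'a set)"
  have "inj_on (\<lambda>f. restrict f (carrier G)) (GA G :: ('g \<Rightarrow> 'a) set)"
    by (auto simp: inj_on_def GA_def restrict_def fun_eq_iff) (metis)
  moreover have "(\<lambda>f. restrict f (carrier G)) ` (GA G :: ('g \<Rightarrow> 'a) set) \<subseteq> (\<Pi>\<^sub>E i \<in> carrier G. (UNIV :: 'a set))"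
    by auto
  moreover have "finite (\<Pi>\<^sub>E i \<in> carrier G. (UNIV :: 'a set))"
    using fin F by (intro finite_PiE) auto
  ultimately show ?thesis by (rule inj_on_finite)
qed

lemma ideal_one:
  assumes K: "left_ideal AG K" and one: "dl G \<one> \<in> K"
  shows "K = GA G"
proof
  show "K \<subseteq> GA G" using left_idealD(1)[OF K] .
  show "GA G \<subseteq> K"
  proof
    fix f :: "'g \<Rightarrow> 'a" assume f: "f \<in> GA G"
    then have "cv G f (dl G \<one>) \<in> K" using left_idealD(5)[OF K f one] by simp
    then show "f \<in> K" using cv_one_right[OF f] by simp
  qed
qed

lemma exists_maximal:
  assumes F: "finite (UNIV :: 'a::field set)"
    and K: "left_ideal AG K" and one: "(dl G \<one> :: 'g \<Rightarrow> 'a) \<notin> K"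
  shows "\<exists>M. maximal_left_ideal AG M \<and> K \<subseteq> M"
proof -
  let ?S = "{M. left_ideal AG M \<and> K \<subseteq> M \<and> (dl G \<one> :: 'g \<Rightarrow> 'a) \<notin> M}"
  have "?S \<subseteq> Pow (GA G)" using left_idealD(1) by auto
  then have finS: "finite ?S" using finite_GA[OF F] by (meson finite_Pow_iff rev_finite_subset)
  have "K \<in> ?S" using K one by auto
  from finite_has_maximal2[OF finS this] obtain M where
    M: "M \<in> ?S" and Mmax: "\<forall>b\<in>?S. M \<subseteq> b \<longrightarrow> M = b" by auto
  have "maximal_left_ideal AG M"
    unfolding maximal_left_ideal_def
  proof (intro conjI allI impI)
    show "left_ideal AG M" using M by auto
    show "M \<noteq> carrier AG" using M by (auto simp: ga_simps)
    fix L assume L: "left_ideal AG L \<and> M \<subseteq> L"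
    show "L = M \<or> L = carrier AG"
    proof (cases "(dl G \<one> :: 'g \<Rightarrow> 'a) \<in> L")
      case True then show ?thesis using ideal_one L by (auto simp: ga_simps)
    next
      case False then have "L \<in> ?S" using L M by auto
      then show ?thesis using Mmax L by auto
    qed
  qed
  then show ?thesis using M by auto
qed

lemma quasi_regular:
  assumes F: "finite (UNIV :: 'a::field set)"
    and z: "(z :: 'g \<Rightarrow> 'a) \<in> GA G" and zM: "\<And>M. maximal_left_ideal AG M \<Longrightarrow> z \<in> M"
  shows "\<exists>u\<in>GA G. cv G u (dl G \<one> - z) = dl G \<one>"
proof (rule ccontr)
  assume nu: "\<not> ?thesis"
  let ?K = "{cv G w (dl G \<one> - z) | w. w \<in> GA G}"
  have K: "left_ideal AG ?K"
  proof (rule left_idealI)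
    show "?K \<subseteq> GA G" by auto
    show "0 \<in> ?K" using cv_zero_left GA_zero by (metis (mono_tags, lifting) mem_Collect_eq)
    show "a + b \<in> ?K" if "a \<in> ?K" "b \<in> ?K" for a b
      using that by (auto simp: cv_add_left[symmetric])
    show "- a \<in> ?K" if "a \<in> ?K" for a
      using that by (auto simp: cv_neg_left[symmetric])
    show "cv G r a \<in> ?K" if "r \<in> GA G" "a \<in> ?K" for r a
      using that by (auto simp: cv_assoc[symmetric])
  qed
  have "dl G \<one> \<notin> ?K" using nu by auto
  from exists_maximal[OF F K this] obtain M where M: "maximal_left_ideal AG M" and KM: "?K \<subseteq> M"
    by auto
  have MI: "left_ideal AG M" using M by (simp add: maximal_left_ideal_def)
  have "dl G \<one> - z \<in> ?K"
    using cv_one_left[of "dl G \<one> - z"] z by (metis (mono_tags, lifting) GA_diff dl_GA one_closed mem_Collect_eq)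
  then have "dl G \<one> - z \<in> M" using KM by auto
  then have "(dl G \<one> - z) + z \<in> M" using left_idealD(3)[OF MI] zM[OF M] by blast
  then have "dl G \<one> \<in> M" by simp
  then have "M = GA G" using ideal_one[OF MI] by simp
  then show False using M by (simp add: maximal_left_ideal_def ga_simps)
qed

lemma nil_in_maximal:
  assumes W: "W \<subseteq> GA G" and Wl: "\<And>w v. w \<in> GA G \<Longrightarrow> v \<in> W \<Longrightarrow> cv G w v \<in> W"
    and nil: "\<And>v. v \<in> W \<Longrightarrow> cv G v (cv G v v) = (0 :: 'g \<Rightarrow> 'a::field)"
    and M: "maximal_left_ideal AG M"
  shows "W \<subseteq> M"
proof
  fix v assume v: "v \<in> W"
  have MI: "left_ideal AG M" using M by (simp add: maximal_left_ideal_def)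
  show "v \<in> M"
  proof (rule ccontr)
    assume vM: "v \<notin> M"
    let ?K = "{a + cv G w v | a w. a \<in> M \<and> w \<in> GA G}"
    have vG: "v \<in> GA G" using v W by auto
    have K: "left_ideal AG ?K"
    proof (rule left_idealI)
      show "?K \<subseteq> GA G" using left_idealD(1)[OF MI] by auto
      show "0 \<in> ?K" using left_idealD(2)[OF MI] GA_zero
        by (metis (mono_tags, lifting) add.right_neutral cv_zero_left mem_Collect_eq)
      show "a + b \<in> ?K" if ha: "a \<in> ?K" and hb: "b \<in> ?K" for a b
      proof -
        obtain a1 w1 where 1: "a = a1 + cv G w1 v" "a1 \<in> M" "w1 \<in> GA G" using ha by blast
        obtain a2 w2 where 2: "b = a2 + cv G w2 v" "a2 \<in> M" "w2 \<in> GA G" using hb by blast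
        have "a + b = (a1 + a2) + cv G (w1 + w2) v" using 1 2 by (simp add: cv_add_left algebra_simps)
        moreover have "a1 + a2 \<in> M" using left_idealD(3)[OF MI] 1 2 by auto
        ultimately show ?thesis using 1 2 by fastforce
      qed
      show "- a \<in> ?K" if ha: "a \<in> ?K" for a
      proof -
        obtain a1 w1 where 1: "a = a1 + cv G w1 v" "a1 \<in> M" "w1 \<in> GA G" using ha by blast
        have "- a = (- a1) + cv G (- w1) v" using 1 by (simp add: cv_neg_left)
        moreover have "- a1 \<in> M" using left_idealD(4)[OF MI] 1 by auto
        ultimately show ?thesis using 1 by fastforce
      qed
      show "cv G r a \<in> ?K" if hr: "r \<in> GA G" and ha: "a \<in> ?K" for r a
      proof -
        obtain a1 w1 where 1: "a = a1 + cv G w1 v" "a1 \<in> M" "w1 \<in> GA G" using ha by blast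
        have "cv G r a = cv G r a1 + cv G (cv G r w1) v" using 1 by (simp add: cv_add_right cv_assoc)
        moreover have "cv G r a1 \<in> M" using left_idealD(5)[OF MI hr] 1 by auto
        ultimately show ?thesis by fastforce
      qed
    qed
    have "M \<subseteq> ?K"
    proof
      fix a assume "a \<in> M"
      moreover have "a = a + cv G 0 v" by simp
      ultimately show "a \<in> ?K" using GA_zero by blast
    qed
    have "v \<in> ?K"
      using left_idealD(2)[OF MI] cv_one_left[OF vG] by (metis (mono_tags, lifting) add_0 dl_GA one_closed mem_Collect_eq)
    then have "?K \<noteq> M" using vM by auto
    moreover have "?K = M \<or> ?K = carrier AG"
      using M K \<open>M \<subseteq> ?K\<close> unfolding maximal_left_ideal_def by blast
    ultimately have "?K = carrier AG" by blast
    then have "dl G \<one> \<in> ?K" by (simp add: ga_simps)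
    then obtain a w where aw: "dl G \<one> = a + cv G w v" "a \<in> M" "w \<in> GA G" by auto
    define q where "q = cv G w v"
    have qW: "q \<in> W" using Wl[OF aw(3) v] q_def by simp
    have qG: "q \<in> GA G" using qW W by auto
    have a: "a = dl G \<one> - q" using aw q_def by simp
    have "cv G (dl G \<one> + q + cv G q q) a = dl G \<one> - cv G q (cv G q q)"
      unfolding a using qG
      by (simp add: cv_diff_right cv_add_left cv_one_right cv_one_left cv_assoc algebra_simps)
    also have "\<dots> = dl G \<one>" using nil[OF qW] by simp
    finally have "dl G \<one> \<in> M"
      using left_idealD(5)[OF MI _ aw(2), of "dl G \<one> + q + cv G q q"] qG by auto
    then have "M = GA G" using ideal_one[OF MI] by simp
    then show False using M by (simp add: maximal_left_ideal_def ga_simps)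
  qed
qed

end


lemma vs_ga: "vector_space (ga_scale :: 'a::field \<Rightarrow> ('g \<Rightarrow> 'a) \<Rightarrow> ('g \<Rightarrow> 'a))"
  by unfold_locales (simp_all add: ga_scale_def fun_eq_iff algebra_simps)

lemma vsp_ga: "vector_space_pair (ga_scale :: 'a::field \<Rightarrow> ('g \<Rightarrow> 'a) \<Rightarrow> ('g \<Rightarrow> 'a)) ga_scale"
  by (intro vector_space_pair.intro vs_ga)

context fgrp begin

lemma exists_proj:
  assumes sub: "module.subspace (ga_scale :: 'a::field \<Rightarrow> ('g \<Rightarrow> 'a) \<Rightarrow> ('g \<Rightarrow> 'a)) W"
  shows "\<exists>p. Vector_Spaces.linear (ga_scale :: 'a::field \<Rightarrow> ('g \<Rightarrow> 'a) \<Rightarrow> ('g \<Rightarrow> 'a)) ga_scale p \<and> (\<forall>v. p v \<in> W) \<and> (\<forall>v\<in>W. p v = v)"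
proof -
  interpret vs: vector_space "ga_scale :: 'a \<Rightarrow> ('g \<Rightarrow> 'a) \<Rightarrow> ('g \<Rightarrow> 'a)" by (rule vs_ga)
  interpret vp: vector_space_pair "ga_scale :: 'a \<Rightarrow> ('g \<Rightarrow> 'a) \<Rightarrow> ('g \<Rightarrow> 'a)" ga_scale by (rule vsp_ga)
  obtain B where B: "B \<subseteq> W" "vs.independent B" "W \<subseteq> vs.span B"
    by (rule vs.maximal_independent_subset)
  have spanB: "vs.span B = W"
    using B sub vs.span_minimal by blast
  define p where "p = vp.construct B id"
  have lin: "Vector_Spaces.linear (ga_scale :: 'a \<Rightarrow> ('g \<Rightarrow> 'a) \<Rightarrow> ('g \<Rightarrow> 'a)) ga_scale p"
    unfolding p_def by (rule vp.linear_construct[OF B(2)])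
  have "p v \<in> W" for v
    unfolding p_def using vp.construct_in_span[OF B(2), of id v] spanB by simp
  moreover have "p v = v" if "v \<in> W" for v
  proof -
    have "p v = id v"
      by (rule vp.linear_eq_on[OF lin vs.linear_id, of v B])
        (use that spanB in \<open>auto simp: p_def vp.construct_basis[OF B(2)]\<close>)
    then show ?thesis by simp
  qed
  ultimately show ?thesis using lin by blast
qed

lemma sep_zero:
  assumes F: "finite (UNIV :: 'a::field set)"
    and WG: "W \<subseteq> GA G" and W0: "(0 :: 'g \<Rightarrow> 'a) \<in> W"
    and Wadd: "\<And>a b. a \<in> W \<Longrightarrow> b \<in> W \<Longrightarrow> a + b \<in> W"
    and Wscale: "\<And>c a. a \<in> W \<Longrightarrow> ga_scale c a \<in> W"
    and Wl: "\<And>r a. r \<in> GA G \<Longrightarrow> a \<in> W \<Longrightarrow> cv G r a \<in> W"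
    and QR: "\<And>v. v \<in> W \<Longrightarrow> \<exists>u\<in>GA G. cv G u (dl G \<one> - v) = dl G \<one>"
    and dsum: "(\<Sum>g\<in>carrier G. cv G (cv G (dl G g) d) (dl G (inv g))) = c1"
    and Wc1: "\<And>v. v \<in> W \<Longrightarrow> cv G c1 v = v"
    and v: "v \<in> W"
  shows "v = 0"
proof -
  interpret vs: vector_space "ga_scale :: 'a \<Rightarrow> ('g \<Rightarrow> 'a) \<Rightarrow> ('g \<Rightarrow> 'a)" by (rule vs_ga)
  interpret vp: vector_space_pair "ga_scale :: 'a \<Rightarrow> ('g \<Rightarrow> 'a) \<Rightarrow> ('g \<Rightarrow> 'a)" ga_scale by (rule vsp_ga)
  have sub: "vs.subspace W"
    by (rule vs.subspaceI) (use W0 Wadd Wscale in auto)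
  obtain p where lin: "Vector_Spaces.linear (ga_scale :: 'a \<Rightarrow> ('g \<Rightarrow> 'a) \<Rightarrow> ('g \<Rightarrow> 'a)) ga_scale p"
    and pW: "\<And>v. p v \<in> W" and pid: "\<And>v. v \<in> W \<Longrightarrow> p v = v"
    using exists_proj[OF sub] by blast
  define l where "l = (\<Sum>g\<in>carrier G. cv G (cv G (dl G g) d) (p (dl G (inv g))))"
  have lW: "l \<in> W"
    unfolding l_def by (rule vs.subspace_sum[OF sub]) (intro Wl pW cv_GA)
  have key: "cv G w l = w" if w: "w \<in> W" for w
  proof -
    have wG: "w \<in> GA G" using w WG by auto
    have e1: "cv G w (dl G g) = (\<Sum>h\<in>carrier G. ga_scale (w h) (dl G (h \<otimes> g)))" if "g \<in> carrier G" for g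
      by (subst expand[OF wG]) (simp add: cv_sum_left cv_scale_left cv_dl_dl that)
    have e2: "cv G (dl G a) w = (\<Sum>h\<in>carrier G. ga_scale (w h) (dl G (a \<otimes> h)))" if "a \<in> carrier G" for a
      by (subst expand[OF wG]) (simp add: cv_sum_right cv_scale_right cv_dl_dl that)
    have reidx: "(\<Sum>g\<in>carrier G. cv G (cv G (dl G (h \<otimes> g)) d) (p (dl G (inv g)))) =
            (\<Sum>g\<in>carrier G. cv G (cv G (dl G g) d) (p (dl G (inv g \<otimes> h))))" if h: "h \<in> carrier G" for h
    proof -
      have "(\<Sum>g\<in>carrier G. cv G (cv G (dl G (h \<otimes> g)) d) (p (dl G (inv g)))) =
            (\<Sum>g\<in>carrier G. cv G (cv G (dl G (h \<otimes> (inv h \<otimes> g))) d) (p (dl G (inv (inv h \<otimes> g)))))"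
        by (rule sum_lmult[symmetric]) (use h in simp)
      also have "\<dots> = (\<Sum>g\<in>carrier G. cv G (cv G (dl G g) d) (p (dl G (inv g \<otimes> h))))"
        using h by (intro sum.cong refl) (simp add: m_assoc[symmetric] inv_mult_group)
      finally show ?thesis .
    qed
    have "cv G w l = (\<Sum>g\<in>carrier G. cv G (cv G (cv G w (dl G g)) d) (p (dl G (inv g))))"
      unfolding l_def by (simp add: cv_sum_right cv_assoc)
    also have "\<dots> = (\<Sum>g\<in>carrier G. \<Sum>h\<in>carrier G. ga_scale (w h) (cv G (cv G (dl G (h \<otimes> g)) d) (p (dl G (inv g)))))"
      by (intro sum.cong refl) (simp add: e1 cv_sum_left cv_scale_left)
    also have "\<dots> = (\<Sum>h\<in>carrier G. ga_scale (w h) (\<Sum>g\<in>carrier G. cv G (cv G (dl G (h \<otimes> g)) d) (p (dl G (inv g)))))"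
      by (subst sum.swap) (simp add: vs.scale_sum_right)
    also have "\<dots> = (\<Sum>h\<in>carrier G. ga_scale (w h) (\<Sum>g\<in>carrier G. cv G (cv G (dl G g) d) (p (dl G (inv g \<otimes> h)))))"
      by (intro sum.cong refl) (simp add: reidx)
    also have "\<dots> = (\<Sum>g\<in>carrier G. cv G (cv G (dl G g) d) (p (\<Sum>h\<in>carrier G. ga_scale (w h) (dl G (inv g \<otimes> h)))))"
    proof -
      have "(\<Sum>h\<in>carrier G. ga_scale (w h) (\<Sum>g\<in>carrier G. cv G (cv G (dl G g) d) (p (dl G (inv g \<otimes> h)))))
          = (\<Sum>h\<in>carrier G. \<Sum>g\<in>carrier G. ga_scale (w h) (cv G (cv G (dl G g) d) (p (dl G (inv g \<otimes> h)))))"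
        by (simp add: vs.scale_sum_right)
      also have "\<dots> = (\<Sum>g\<in>carrier G. \<Sum>h\<in>carrier G. ga_scale (w h) (cv G (cv G (dl G g) d) (p (dl G (inv g \<otimes> h)))))"
        by (rule sum.swap)
      also have "\<dots> = (\<Sum>g\<in>carrier G. cv G (cv G (dl G g) d) (p (\<Sum>h\<in>carrier G. ga_scale (w h) (dl G (inv g \<otimes> h)))))"
        by (intro sum.cong refl)
          (simp add: vp.linear_sum[OF lin] vp.linear_scale[OF lin] cv_sum_right cv_scale_right)
      finally show ?thesis .
    qed
    also have "\<dots> = (\<Sum>g\<in>carrier G. cv G (cv G (dl G g) d) (p (cv G (dl G (inv g)) w)))"
      by (intro sum.cong refl) (simp add: e2)
    also have "\<dots> = (\<Sum>g\<in>carrier G. cv G (cv G (cv G (dl G g) d) (dl G (inv g))) w)"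
      by (intro sum.cong refl) (simp add: pid Wl w cv_assoc)
    also have "\<dots> = cv G c1 w"
      by (simp add: dsum cv_sum_left[symmetric])
    also have "\<dots> = w" by (rule Wc1[OF w])
    finally show ?thesis .
  qed
  have ll: "cv G l l = l" by (rule key[OF lW])
  obtain u where u: "u \<in> GA G" "cv G u (dl G \<one> - l) = dl G \<one>" using QR[OF lW] by blast
  have lG: "l \<in> GA G" using lW WG by auto
  have "l = cv G (cv G u (dl G \<one> - l)) l" using u(2) cv_one_left[OF lG] by simp
  also have "\<dots> = cv G u (l - cv G l l)" by (simp add: cv_assoc cv_diff_left cv_one_left[OF lG])
  also have "\<dots> = 0" using ll by simp
  finally have "l = 0" .
  then show "v = 0" using key[OF v] by simp
qed

end


locale tg = fgrp G for G :: "('g, 'n) monoid_scheme" (structure) +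
  fixes N :: "'g set" and y :: 'g
  assumes N_sub: "subgroup N G"
    and N_norm: "\<And>g n. g \<in> carrier G \<Longrightarrow> n \<in> N \<Longrightarrow> inv g \<otimes> n \<otimes> g \<in> N"
    and N_comm: "\<And>a b. a \<in> N \<Longrightarrow> b \<in> N \<Longrightarrow> a \<otimes> b = b \<otimes> a"
    and y_in: "y \<in> carrier G" and y3: "y \<otimes> y \<otimes> y = \<one>"
    and decomp: "bij_betw (\<lambda>(n, j). n \<otimes> y [^] j) (N \<times> {..<3::nat}) (carrier G)"
    and fpf: "\<And>n. n \<in> N \<Longrightarrow> inv y \<otimes> n \<otimes> y = n \<Longrightarrow> n = \<one>"
begin

lemma N_G[simp]: "n \<in> N \<Longrightarrow> n \<in> carrier G"
  using subgroup.subset[OF N_sub] by auto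
lemma one_N[simp]: "\<one> \<in> N"
  using subgroup.one_closed[OF N_sub] .
lemma N_mult[simp]: "a \<in> N \<Longrightarrow> b \<in> N \<Longrightarrow> a \<otimes> b \<in> N"
  using subgroup.m_closed[OF N_sub] by auto
lemma N_inv[simp]: "a \<in> N \<Longrightarrow> inv a \<in> N"
  using subgroup.m_inv_closed[OF N_sub] by auto
lemma N_norm': "g \<in> carrier G \<Longrightarrow> n \<in> N \<Longrightarrow> g \<otimes> n \<otimes> inv g \<in> N"
  using N_norm[of "inv g" n] by simp
lemma N_subset: "N \<subseteq> carrier G" by auto
lemma finN: "finite N" using fin finite_subset N_subset by blast

lemma yy_in[simp]: "y \<otimes> y \<in> carrier G" using y_in by simp
lemma inv_y: "inv y = y \<otimes> y"
  using inv_equality[of "y \<otimes> y" y] y3 y_in by simp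
lemma inv_yy: "inv (y \<otimes> y) = y"
  using inv_equality[of y "y \<otimes> y"] y3 y_in by (simp add: m_assoc)
lemma ypow0: "y [^] (0::nat) = \<one>" by simp
lemma ypow1: "y [^] (1::nat) = y" using y_in by simp
lemma ypow2: "y [^] (2::nat) = y \<otimes> y" using y_in by (simp add: numeral_2_eq_2)

lemma decomp_ex: "g \<in> carrier G \<Longrightarrow> \<exists>n\<in>N. g = n \<or> g = n \<otimes> y \<or> g = n \<otimes> (y \<otimes> y)"
proof -
  assume g: "g \<in> carrier G"
  then have "g \<in> (\<lambda>(n, j). n \<otimes> y [^] j) ` (N \<times> {..<3::nat})"
    using decomp by (simp add: bij_betw_def)
  then obtain n and j :: nat where "n \<in> N" "j < 3" "g = n \<otimes> y [^] j"
    by auto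
  moreover have "j = 0 \<or> j = 1 \<or> j = 2" using \<open>j < 3\<close> by auto
  ultimately show ?thesis using ypow1 ypow2 by (auto simp: )
qed

lemma decomp_inj: "n \<in> N \<Longrightarrow> n' \<in> N \<Longrightarrow> (j::nat) < 3 \<Longrightarrow> j' < 3 \<Longrightarrow> n \<otimes> y [^] j = n' \<otimes> y [^] j' \<Longrightarrow> n = n' \<and> j = j'"
  using decomp by (auto simp: bij_betw_def inj_on_def)

lemma y_notin: "y \<notin> N"
proof
  assume "y \<in> N"
  then have "y \<otimes> y [^] (0::nat) = \<one> \<otimes> y [^] (1::nat)" using ypow1 y_in by simp
  then show False using decomp_inj[of y \<one> 0 1] \<open>y \<in> N\<close> by simp
qed
lemma yy_notin: "y \<otimes> y \<notin> N"
proof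
  assume "y \<otimes> y \<in> N"
  then have "(y \<otimes> y) \<otimes> y [^] (0::nat) = \<one> \<otimes> y [^] (2::nat)" using ypow2 y_in by simp
  then show False using decomp_inj[of "y \<otimes> y" \<one> 0 2] \<open>y \<otimes> y \<in> N\<close> by simp
qed

lemma coset_eq_iff: "n \<in> N \<Longrightarrow> g \<in> carrier G \<Longrightarrow> (n \<otimes> g \<in> N) = (g \<in> N)"
proof
  assume n: "n \<in> N" and g: "g \<in> carrier G"
  { assume "n \<otimes> g \<in> N"
    then have "inv n \<otimes> (n \<otimes> g) \<in> N" using n by simp
    then show "g \<in> N" using n g by (simp add: m_assoc[symmetric]) }
  { assume "g \<in> N" then show "n \<otimes> g \<in> N" using n by simp }
qed

lemma sumG: "(\<Sum>g\<in>carrier G. f g) = (\<Sum>n\<in>N. f n) + (\<Sum>n\<in>N. f (n \<otimes> y)) + (\<Sum>n\<in>N. f (n \<otimes> (y \<otimes> y)))"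
proof -
  have "(\<Sum>g\<in>carrier G. f g) = (\<Sum>x\<in>N \<times> {..<3::nat}. f ((\<lambda>(n, j). n \<otimes> y [^] j) x))"
    using sum.reindex_bij_betw[OF decomp, of f] by simp
  also have "\<dots> = (\<Sum>n\<in>N. \<Sum>j<3::nat. f (n \<otimes> y [^] j))"
    by (simp add: sum.cartesian_product split_def)
  also have "\<dots> = (\<Sum>n\<in>N. f n + f (n \<otimes> y) + f (n \<otimes> (y \<otimes> y)))"
    using y_in by (intro sum.cong refl) (simp add: numeral_3_eq_3 lessThan_Suc add_ac)
  finally show ?thesis by (simp add: sum.distrib)
qed

lemma bij_N_lmult: "n \<in> N \<Longrightarrow> bij_betw (\<lambda>u. n \<otimes> u) N N"
  by (rule bij_betwI[where g="\<lambda>u. inv n \<otimes> u"]) (auto simp: m_assoc[symmetric])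

lemma inv_conj_N: "n \<in> N \<Longrightarrow> z \<in> N \<Longrightarrow> inv n \<otimes> z \<otimes> n = z"
  using N_comm[of "inv n" z] by (simp add: m_assoc)

definition sig where "sig n = inv y \<otimes> n \<otimes> y"
lemma sig_N: "n \<in> N \<Longrightarrow> sig n \<in> N" using N_norm y_in by (simp add: sig_def)
lemma sig3: "n \<in> N \<Longrightarrow> sig (sig (sig n)) = n"
proof -
  assume n: "n \<in> N"
  have "sig (sig (sig n)) = inv (y \<otimes> y \<otimes> y) \<otimes> n \<otimes> (y \<otimes> y \<otimes> y)"
    using n y_in by (simp add: sig_def m_assoc inv_mult_group)
  then show ?thesis using y3 n by simp
qed
lemma sig_one: "sig \<one> = \<one>" using y_in by (simp add: sig_def)
lemma sig_inj: "a \<in> N \<Longrightarrow> b \<in> N \<Longrightarrow> sig a = sig b \<Longrightarrow> a = b"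
  using y_in by (simp add: sig_def)

end


lemma poly_c0: fixes a0 a1 a2 :: "'a::field" assumes a2: "a2 = - a0 - a1" and three: "(3::'a) = 0"
  shows "a0 * (a0 * a0 + a1 * a2 + a2 * a1) + a1 * (a0 * a2 + a1 * a1 + a2 * a0) + a2 * (a0 * a1 + a1 * a0 + a2 * a2) = 0"
proof -
  have "a0 * (a0 * a0 + a1 * a2 + a2 * a1) + a1 * (a0 * a2 + a1 * a1 + a2 * a0) + a2 * (a0 * a1 + a1 * a0 + a2 * a2)
      = 3 * (- 3 * a0 * a0 * a1 - 3 * a0 * a1 * a1)"
    unfolding a2 by (simp add: algebra_simps)
  then show ?thesis using three by simp
qed
lemma poly_c1: fixes a0 a1 a2 :: "'a::field" assumes three: "(3::'a) = 0"
  shows "a0 * (a0 * a1 + a1 * a0 + a2 * a2) + a1 * (a0 * a0 + a1 * a2 + a2 * a1) + a2 * (a0 * a2 + a1 * a1 + a2 * a0) = 0"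
proof -
  have "a0 * (a0 * a1 + a1 * a0 + a2 * a2) + a1 * (a0 * a0 + a1 * a2 + a2 * a1) + a2 * (a0 * a2 + a1 * a1 + a2 * a0)
      = 3 * (a0 * a0 * a1 + a0 * a2 * a2 + a1 * a1 * a2)"
    by (simp add: algebra_simps)
  then show ?thesis using three by simp
qed
lemma poly_c2: fixes a0 a1 a2 :: "'a::field" assumes three: "(3::'a) = 0"
  shows "a0 * (a0 * a2 + a1 * a1 + a2 * a0) + a1 * (a0 * a1 + a1 * a0 + a2 * a2) + a2 * (a0 * a0 + a1 * a2 + a2 * a1) = 0"
proof -
  have "a0 * (a0 * a2 + a1 * a1 + a2 * a0) + a1 * (a0 * a1 + a1 * a0 + a2 * a2) + a2 * (a0 * a0 + a1 * a2 + a2 * a1)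
      = 3 * (a0 * a0 * a2 + a0 * a1 * a1 + a1 * a2 * a2)"
    by (simp add: algebra_simps)
  then show ?thesis using three by simp
qed

locale tga = tg G N y for G :: "('g, 'n) monoid_scheme" (structure) and N y +
  fixes ty :: "'a::field itself"
  assumes finF: "finite (UNIV :: 'a set)" and three: "(3::'a) = 0"
    and cardN1: "(of_nat (card N) :: 'a) = 1"
begin

definition eN :: "'g \<Rightarrow> 'a" where "eN = (\<lambda>z. if z \<in> N then 1 else 0)"
definition eps :: "('g \<Rightarrow> 'a) \<Rightarrow> 'a" where "eps f = (\<Sum>g\<in>carrier G. f g)"
definition invN :: "('g \<Rightarrow> 'a) \<Rightarrow> bool" where
  "invN f \<longleftrightarrow> (\<forall>n\<in>N. \<forall>g\<in>carrier G. f (n \<otimes> g) = f g)"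
definition VV :: "('g \<Rightarrow> 'a) set" where "VV = {f \<in> GA G. invN f \<and> eps f = 0}"

lemma canc1[simp]: "h \<in> carrier G \<Longrightarrow> z \<in> carrier G \<Longrightarrow> inv h \<otimes> (h \<otimes> z) = z"
  by (simp add: m_assoc[symmetric])
lemma canc2[simp]: "h \<in> carrier G \<Longrightarrow> z \<in> carrier G \<Longrightarrow> h \<otimes> (inv h \<otimes> z) = z"
  by (simp add: m_assoc[symmetric])

lemma eN_GA[simp]: "eN \<in> GA G" by (auto simp: GA_def eN_def)

lemma sumN_const: "(\<Sum>n\<in>N. (c::'a)) = c"
  using cardN1 by simp

lemma sum_restrictN: "(\<Sum>u\<in>carrier G. if u \<in> N then Xf u else (0::'a)) = (\<Sum>u\<in>N. Xf u)"
proof -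
  have "(\<Sum>u\<in>carrier G. if u \<in> N then Xf u else (0::'a)) = (\<Sum>u\<in>carrier G \<inter> N. Xf u)"
    using fin by (rule sum.inter_restrict[symmetric])
  also have "carrier G \<inter> N = N" using N_subset by auto
  finally show ?thesis .
qed

lemma invN_apply: "invN v \<Longrightarrow> h \<in> carrier G \<Longrightarrow> n \<in> N \<Longrightarrow> z \<in> carrier G \<Longrightarrow> v (h \<otimes> n \<otimes> z) = v (h \<otimes> z)"
proof -
  assume v: "invN v" and h: "h \<in> carrier G" and n: "n \<in> N" and z: "z \<in> carrier G"
  have "h \<otimes> n \<otimes> z = (h \<otimes> n \<otimes> inv h) \<otimes> (h \<otimes> z)"
    using h n z by (simp add: m_assoc)
  then show ?thesis using v N_norm'[OF h n] h z by (simp add: invN_def)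
qed

lemma cv_eN_left: "z \<in> carrier G \<Longrightarrow> cv G eN w z = (\<Sum>u\<in>N. w (inv u \<otimes> z))"
proof -
  assume z: "z \<in> carrier G"
  have "cv G eN w z = (\<Sum>u\<in>carrier G. if u \<in> N then w (inv u \<otimes> z) else 0)"
    unfolding cv_app[OF z] by (intro sum.cong refl) (simp add: eN_def)
  then show ?thesis by (simp add: sum_restrictN)
qed

lemma eN_normal: "z \<in> carrier G \<Longrightarrow> h \<in> carrier G \<Longrightarrow> eN (z \<otimes> inv h) = eN (inv h \<otimes> z)"
proof -
  assume z: "z \<in> carrier G" and h: "h \<in> carrier G"
  have 1: "inv h \<otimes> (z \<otimes> inv h) \<otimes> h = inv h \<otimes> z" using z h by (simp add: m_assoc)
  have 2: "inv (inv h) \<otimes> (inv h \<otimes> z) \<otimes> inv h = z \<otimes> inv h" using z h by (simp add: m_assoc[symmetric])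
  have "(z \<otimes> inv h \<in> N) = (inv h \<otimes> z \<in> N)"
    using N_norm[OF h, of "z \<otimes> inv h"] N_norm[of "inv h" "inv h \<otimes> z"] 1 2 h z by auto
  then show ?thesis by (simp add: eN_def)
qed

lemma eN_central: "cv G eN w = cv G w eN"
proof
  fix z show "cv G eN w z = cv G w eN z"
  proof (cases "z \<in> carrier G")
    case z: True
    have "cv G w eN z = (\<Sum>h\<in>carrier G. eN (z \<otimes> inv h) * w h)"
      using z by (simp add: cv_app eN_normal mult.commute)
    also have "\<dots> = (\<Sum>u\<in>carrier G. eN (z \<otimes> inv (inv u \<otimes> z)) * w (inv u \<otimes> z))"
      by (rule sum_invl[OF z, symmetric])
    also have "\<dots> = cv G eN w z"
      using z by (simp add: cv_app inv_mult_group m_assoc[symmetric])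
    finally show ?thesis by simp
  qed (simp add: cv_out)
qed

lemma invN_cv_eN: "invN (cv G w eN)"
  unfolding invN_def
proof (intro ballI)
  fix n g assume n: "n \<in> N" and g: "g \<in> carrier G"
  have "\<And>u. u \<in> carrier G \<Longrightarrow> eN (inv u \<otimes> (n \<otimes> g)) = eN (inv u \<otimes> g)"
  proof -
    fix u assume u: "u \<in> carrier G"
    have "inv u \<otimes> (n \<otimes> g) = (inv u \<otimes> n \<otimes> u) \<otimes> (inv u \<otimes> g)"
      using u n g by (simp add: m_assoc)
    then show "eN (inv u \<otimes> (n \<otimes> g)) = eN (inv u \<otimes> g)"
      using coset_eq_iff[OF N_norm[OF u n], of "inv u \<otimes> g"] u g by (simp add: eN_def)
  qed
  then show "cv G w eN (n \<otimes> g) = cv G w eN g"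
    using n g by (simp add: cv_app)
qed

lemma invN_eN_cv: "invN (cv G eN w)"
  using invN_cv_eN eN_central by simp

lemma cv_eN_invN: "f \<in> GA G \<Longrightarrow> invN f \<Longrightarrow> cv G eN f = f"
proof
  fix z assume f: "f \<in> GA G" and inv: "invN f"
  show "cv G eN f z = f z"
  proof (cases "z \<in> carrier G")
    case z: True
    have "cv G eN f z = (\<Sum>u\<in>N. f (inv u \<otimes> z))" using z by (rule cv_eN_left)
    also have "\<dots> = (\<Sum>u\<in>N. f z)"
      using inv z by (intro sum.cong refl) (simp add: invN_def)
    also have "\<dots> = f z" by (rule sumN_const)
    finally show ?thesis .
  qed (use f in \<open>simp add: cv_out GA_def\<close>)
qed

lemma invN_eN: "invN eN"
  unfolding invN_def eN_def using coset_eq_iff by auto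

lemma eN_idem: "cv G eN eN = eN"
  by (rule cv_eN_invN[OF eN_GA invN_eN])

lemma eps_cv: "eps (cv G w v) = eps w * eps v"
proof -
  have "eps (cv G w v) = (\<Sum>z\<in>carrier G. \<Sum>u\<in>carrier G. w u * v (inv u \<otimes> z))"
    by (simp add: eps_def cv_app)
  also have "\<dots> = (\<Sum>u\<in>carrier G. w u * (\<Sum>z\<in>carrier G. v (inv u \<otimes> z)))"
    by (subst sum.swap) (simp add: sum_distrib_left)
  also have "\<dots> = (\<Sum>u\<in>carrier G. w u * eps v)"
    by (intro sum.cong refl) (simp add: eps_def sum_lmult)
  also have "\<dots> = eps w * eps v" by (simp add: eps_def sum_distrib_right)
  finally show ?thesis .
qed

lemma eps_invN: "invN f \<Longrightarrow> eps f = f \<one> + f y + f (y \<otimes> y)"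
proof -
  assume f: "invN f"
  have e0: "(\<Sum>n\<in>N. f n) = (\<Sum>n\<in>N. f \<one>)"
  proof (rule sum.cong[OF refl])
    fix n assume "n \<in> N" then show "f n = f \<one>" using f unfolding invN_def
      by (metis N_G one_closed r_one)
  qed
  have e1: "(\<Sum>n\<in>N. f (n \<otimes> y)) = (\<Sum>n\<in>N. f y)"
    using f y_in by (intro sum.cong refl) (simp add: invN_def)
  have e2: "(\<Sum>n\<in>N. f (n \<otimes> (y \<otimes> y))) = (\<Sum>n\<in>N. f (y \<otimes> y))"
    using f y_in by (intro sum.cong refl) (simp add: invN_def)
  show ?thesis unfolding eps_def sumG e0 e1 e2 sumN_const ..
qed

lemma invN_val: "invN f \<Longrightarrow> z \<in> carrier G \<Longrightarrow> f z = f \<one> \<or> f z = f y \<or> f z = f (y \<otimes> y)"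
proof -
  assume f: "invN f" and z: "z \<in> carrier G"
  obtain n where n: "n \<in> N" "z = n \<or> z = n \<otimes> y \<or> z = n \<otimes> (y \<otimes> y)" using decomp_ex[OF z] by blast
  have "f n = f \<one>" using f n(1) unfolding invN_def by (metis N_G one_closed r_one)
  then show ?thesis using f n y_in by (auto simp: invN_def)
qed

lemma VV_GA: "VV \<subseteq> GA G" by (auto simp: VV_def)

lemma VV_left: "w \<in> GA G \<Longrightarrow> v \<in> VV \<Longrightarrow> cv G w v \<in> VV"
proof -
  assume w: "w \<in> GA G" and v: "v \<in> VV"
  have vG: "v \<in> GA G" and vi: "invN v" and ve: "eps v = 0" using v by (auto simp: VV_def)
  have "cv G w v = cv G w (cv G eN v)" using cv_eN_invN[OF vG vi] by simp
  also have "\<dots> = cv G (cv G w eN) v" by (simp add: cv_assoc)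
  also have "\<dots> = cv G (cv G eN w) v" by (simp add: eN_central)
  also have "\<dots> = cv G eN (cv G w v)" by (simp add: cv_assoc)
  finally have "invN (cv G w v)" using invN_eN_cv by metis
  then show ?thesis using ve by (simp add: VV_def eps_cv)
qed

lemma cv_invN_formula:
  assumes v: "invN v" and z: "z \<in> carrier G" and w: "invN w"
  shows "cv G w v z = w \<one> * v z + w y * v (inv y \<otimes> z) + w (y \<otimes> y) * v (inv (y \<otimes> y) \<otimes> z)"
proof -
  have A: "w (n \<otimes> h) * v (inv (n \<otimes> h) \<otimes> z) = w h * v (inv h \<otimes> z)" if "n \<in> N" "h \<in> carrier G" for n h
  proof -
    have "inv (n \<otimes> h) \<otimes> z = inv h \<otimes> inv n \<otimes> z" using that z by (simp add: inv_mult_group)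
    then have "v (inv (n \<otimes> h) \<otimes> z) = v (inv h \<otimes> z)"
      using invN_apply[OF v _ _ z, of "inv h" "inv n"] that by simp
    moreover have "w (n \<otimes> h) = w h" using w that by (simp add: invN_def)
    ultimately show ?thesis by simp
  qed
  have S0: "(\<Sum>n\<in>N. w n * v (inv n \<otimes> z)) = (\<Sum>n\<in>N. w \<one> * v z)"
    by (intro sum.cong refl) (use A[of _ \<one>] z in simp)
  have S1: "(\<Sum>n\<in>N. w (n \<otimes> y) * v (inv (n \<otimes> y) \<otimes> z)) = (\<Sum>n\<in>N. w y * v (inv y \<otimes> z))"
    using A y_in by (intro sum.cong refl) simp
  have S2: "(\<Sum>n\<in>N. w (n \<otimes> (y \<otimes> y)) * v (inv (n \<otimes> (y \<otimes> y)) \<otimes> z)) = (\<Sum>n\<in>N. w (y \<otimes> y) * v (inv (y \<otimes> y) \<otimes> z))"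
    using A y_in by (intro sum.cong refl) simp
  show ?thesis unfolding cv_app[OF z] sumG S0 S1 S2 sumN_const ..
qed

lemma invN_zero: "f \<in> GA G \<Longrightarrow> invN f \<Longrightarrow> f \<one> = 0 \<Longrightarrow> f y = 0 \<Longrightarrow> f (y \<otimes> y) = 0 \<Longrightarrow> f = 0"
proof
  fix z assume f: "f \<in> GA G" "invN f" "f \<one> = 0" "f y = 0" "f (y \<otimes> y) = 0"
  show "f z = 0 z"
  proof (cases "z \<in> carrier G")
    case True then show ?thesis using invN_val[OF f(2) True] f by auto
  qed (use f in \<open>simp add: GA_def\<close>)
qed

lemma VV_cube: "v \<in> VV \<Longrightarrow> cv G v (cv G v v) = 0"
proof -
  assume v: "v \<in> VV"
  have vG: "v \<in> GA G" and vi: "invN v" and ve: "eps v = 0" using v by (auto simp: VV_def)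
  define a0 a1 a2 where "a0 = v \<one>" and "a1 = v y" and "a2 = v (y \<otimes> y)"
  have s: "a0 + a1 + a2 = 0" using ve eps_invN[OF vi] by (simp add: a0_def a1_def a2_def)
  then have a2: "a2 = - a0 - a1" by (simp add: algebra_simps eq_neg_iff_add_eq_0)
  have bV: "cv G v v \<in> VV" by (rule VV_left[OF vG v])
  then have bi: "invN (cv G v v)" by (simp add: VV_def)
  have cV: "cv G v (cv G v v) \<in> VV" by (rule VV_left[OF vG bV])
  then have ci: "invN (cv G v (cv G v v))" and cG: "cv G v (cv G v v) \<in> GA G" by (auto simp: VV_def)
  have yy: "inv y \<otimes> \<one> = y \<otimes> y" "inv (y \<otimes> y) \<otimes> \<one> = y" "inv y \<otimes> y = \<one>" "inv (y \<otimes> y) \<otimes> y = y \<otimes> y"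
     "inv y \<otimes> (y \<otimes> y) = y" "inv (y \<otimes> y) \<otimes> (y \<otimes> y) = \<one>"
    using y_in y3 by (simp_all add: inv_y inv_yy m_assoc)
  have b0: "cv G v v \<one> = a0 * a0 + a1 * a2 + a2 * a1"
    using cv_invN_formula[OF vi _ vi, of \<one>] y_in by (simp add: yy a0_def a1_def a2_def)
  have b1: "cv G v v y = a0 * a1 + a1 * a0 + a2 * a2"
    using cv_invN_formula[OF vi _ vi, of y] y_in by (simp add: yy a0_def a1_def a2_def)
  have b2: "cv G v v (y \<otimes> y) = a0 * a2 + a1 * a1 + a2 * a0"
    using cv_invN_formula[OF vi _ vi, of "y \<otimes> y"] y_in by (simp add: yy a0_def a1_def a2_def)
  have c0: "cv G v (cv G v v) \<one> = a0 * (a0 * a0 + a1 * a2 + a2 * a1) + a1 * (a0 * a2 + a1 * a1 + a2 * a0) + a2 * (a0 * a1 + a1 * a0 + a2 * a2)"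
    using cv_invN_formula[OF bi _ vi, of \<one>] y_in by (simp add: yy b0 b1 b2 a0_def a1_def a2_def)
  have c1: "cv G v (cv G v v) y = a0 * (a0 * a1 + a1 * a0 + a2 * a2) + a1 * (a0 * a0 + a1 * a2 + a2 * a1) + a2 * (a0 * a2 + a1 * a1 + a2 * a0)"
    using cv_invN_formula[OF bi _ vi, of y] y_in by (simp add: yy b0 b1 b2 a0_def a1_def a2_def)
  have c2: "cv G v (cv G v v) (y \<otimes> y) = a0 * (a0 * a2 + a1 * a1 + a2 * a0) + a1 * (a0 * a1 + a1 * a0 + a2 * a2) + a2 * (a0 * a0 + a1 * a2 + a2 * a1)"
    using cv_invN_formula[OF bi _ vi, of "y \<otimes> y"] y_in by (simp add: yy b0 b1 b2 a0_def a1_def a2_def)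
  have z0: "cv G v (cv G v v) \<one> = 0" unfolding c0 by (rule poly_c0[OF a2 three])
  have z1: "cv G v (cv G v v) y = 0" unfolding c1 by (rule poly_c1[OF three])
  have z2: "cv G v (cv G v v) (y \<otimes> y) = 0" unfolding c2 by (rule poly_c2[OF three])
  show ?thesis by (rule invN_zero[OF cG ci z0 z1 z2])
qed

end


context tga begin

lemma term_app: "g \<in> carrier G \<Longrightarrow> z \<in> carrier G \<Longrightarrow>
  cv G (cv G (dl G g) d) (dl G (inv g)) z = d (inv g \<otimes> (z \<otimes> g))"
  by (simp add: cv_dl_right cv_dl_left)

lemma dsum_exists: "\<exists>d. (\<Sum>g\<in>carrier G. cv G (cv G (dl G g) d) (dl G (inv g))) = dl G \<one> - eN"
proof -
  obtain \<iota> :: "'g \<Rightarrow> nat" and k where inj: "inj_on \<iota> N" and "\<iota> ` N = {i. i < k}"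
    using finite_imp_inj_to_nat_seg[OF finN] by blast
  define cc where "cc z = (if \<iota> z < \<iota> (sig z) \<and> \<iota> z < \<iota> (sig (sig z)) then 1 else (0::'a))" for z
  define d where "d z = (if z \<in> N then - cc z else 0)" for z
  have "(\<Sum>g\<in>carrier G. cv G (cv G (dl G g) d) (dl G (inv g))) z = (dl G \<one> - eN) z" for z
  proof (cases "z \<in> carrier G")
    case False
    then have "z \<noteq> \<one>" "z \<notin> N" by auto
    then show ?thesis using False by (simp add: sum_fun_app cv_out dl_def eN_def)
  next
    case z: True
    have L: "(\<Sum>g\<in>carrier G. cv G (cv G (dl G g) d) (dl G (inv g))) z = (\<Sum>g\<in>carrier G. d (inv g \<otimes> (z \<otimes> g)))"
      unfolding sum_fun_app using z by (intro sum.cong refl) (simp add: term_app)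
    show ?thesis
    proof (cases "z \<in> N")
      case False
      have "d (inv g \<otimes> (z \<otimes> g)) = 0" if g: "g \<in> carrier G" for g
      proof -
        have "inv g \<otimes> (z \<otimes> g) \<notin> N"
        proof
          assume "inv g \<otimes> (z \<otimes> g) \<in> N"
          then have "g \<otimes> (inv g \<otimes> (z \<otimes> g)) \<otimes> inv g \<in> N" using N_norm' g by blast
          then show False using False g z by (simp add: m_assoc)
        qed
        then show ?thesis by (simp add: d_def)
      qed
      then have "(\<Sum>g\<in>carrier G. d (inv g \<otimes> (z \<otimes> g))) = 0" by simp
      moreover have "z \<noteq> \<one>" using False by auto
      ultimately show ?thesis using L False by (simp add: dl_def eN_def)
    next
      case zN: True
      have s0: "(\<Sum>n\<in>N. d (inv n \<otimes> (z \<otimes> n))) = (\<Sum>n\<in>N. d z)"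
        using zN inv_conj_N by (intro sum.cong refl) (simp add: m_assoc)
      have s1: "(\<Sum>n\<in>N. d (inv (n \<otimes> y) \<otimes> (z \<otimes> (n \<otimes> y)))) = (\<Sum>n\<in>N. d (sig z))"
      proof (intro sum.cong refl)
        fix n assume n: "n \<in> N"
        have "inv (n \<otimes> y) \<otimes> (z \<otimes> (n \<otimes> y)) = inv y \<otimes> (inv n \<otimes> z \<otimes> n) \<otimes> y"
          using n zN y_in by (simp add: inv_mult_group m_assoc)
        then show "d (inv (n \<otimes> y) \<otimes> (z \<otimes> (n \<otimes> y))) = d (sig z)"
          using inv_conj_N[OF n zN] by (simp add: sig_def)
      qed
      have s2: "(\<Sum>n\<in>N. d (inv (n \<otimes> (y \<otimes> y)) \<otimes> (z \<otimes> (n \<otimes> (y \<otimes> y))))) = (\<Sum>n\<in>N. d (sig (sig z)))"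
      proof (intro sum.cong refl)
        fix n assume n: "n \<in> N"
        have "inv (n \<otimes> (y \<otimes> y)) \<otimes> (z \<otimes> (n \<otimes> (y \<otimes> y))) = inv y \<otimes> (inv y \<otimes> (inv n \<otimes> z \<otimes> n) \<otimes> y) \<otimes> y"
          using n zN y_in by (simp add: inv_mult_group m_assoc)
        then show "d (inv (n \<otimes> (y \<otimes> y)) \<otimes> (z \<otimes> (n \<otimes> (y \<otimes> y)))) = d (sig (sig z))"
          using inv_conj_N[OF n zN] by (simp add: sig_def)
      qed
      have "(\<Sum>g\<in>carrier G. d (inv g \<otimes> (z \<otimes> g))) = d z + d (sig z) + d (sig (sig z))"
        unfolding sumG s0 s1 s2 sumN_const ..
      also have "\<dots> = - (cc z + cc (sig z) + cc (sig (sig z)))"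
        using zN sig_N by (simp add: d_def)
      also have "\<dots> = (dl G \<one> - eN) z"
      proof (cases "z = \<one>")
        case True then show ?thesis by (simp add: cc_def sig_one dl_def eN_def)
      next
        case False
        have n1: "sig z \<noteq> z" using fpf[OF zN] False by (auto simp: sig_def)
        have n2: "sig (sig z) \<noteq> sig z" using sig_inj[OF sig_N[OF zN] zN] n1 by auto
        have n3: "sig (sig z) \<noteq> z" using sig3[OF zN] n1 by metis
        have i1: "\<iota> (sig z) \<noteq> \<iota> z" using inj n1 sig_N[OF zN] zN by (auto simp: inj_on_def)
        have i2: "\<iota> (sig (sig z)) \<noteq> \<iota> (sig z)" using inj n2 sig_N[OF sig_N[OF zN]] sig_N[OF zN] by (auto simp: inj_on_def)
        have i3: "\<iota> (sig (sig z)) \<noteq> \<iota> z" using inj n3 sig_N[OF sig_N[OF zN]] zN by (auto simp: inj_on_def)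
        have "cc z + cc (sig z) + cc (sig (sig z)) = 1"
          using i1 i2 i3 unfolding cc_def sig3[OF zN]
          by (cases "\<iota> z < \<iota> (sig z)"; cases "\<iota> z < \<iota> (sig (sig z))"; cases "\<iota> (sig z) < \<iota> (sig (sig z))") auto
        then show ?thesis using False zN by (simp add: dl_def eN_def)
      qed
      finally show ?thesis using L by simp
    qed
  qed
  then show ?thesis by blast
qed

end


context tga begin

lemma eps_add: "eps (a + b) = eps a + eps b" by (simp add: eps_def sum.distrib)
lemma eps_neg: "eps (- a) = - eps a" by (simp add: eps_def sum_negf)
lemma eps_diff: "eps (a - b) = eps a - eps b" by (simp add: eps_def sum_subtractf)
lemma eps_scale: "eps (ga_scale c a) = c * eps a" by (simp add: eps_def ga_scale_def sum_distrib_left)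
lemma eps_zero: "eps 0 = 0" by (simp add: eps_def)
lemma eps_one: "eps (dl G \<one>) = 1"
proof -
  have "eps (dl G \<one>) = (\<Sum>u\<in>carrier G. 1 * dl G \<one> u)" by (simp add: eps_def)
  also have "\<dots> = 1" by (simp only: sum_dl) simp
  finally show ?thesis .
qed

lemma M0_max: "maximal_left_ideal AG {f \<in> GA G. eps f = 0}"
proof -
  let ?M = "{f \<in> GA G. eps f = 0}"
  have MI: "left_ideal AG ?M"
    by (rule left_idealI) (auto simp: eps_add eps_neg eps_zero eps_cv)
  have "dl G \<one> \<notin> ?M" using eps_one by simp
  moreover have "dl G \<one> \<in> carrier AG" by (simp add: ga_simps)
  ultimately have "?M \<noteq> carrier AG" by blast
  moreover have "K = ?M \<or> K = carrier AG" if K: "left_ideal AG K" and MK: "?M \<subseteq> K" for K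
  proof (cases "K \<subseteq> ?M")
    case True then show ?thesis using MK by auto
  next
    case False
    then obtain b where b: "b \<in> K" "eps b \<noteq> 0" using left_idealD(1)[OF K] by auto
    have bG: "b \<in> GA G" using b left_idealD(1)[OF K] by auto
    have "GA G \<subseteq> K"
    proof
      fix c :: "'g \<Rightarrow> 'a" assume c: "c \<in> GA G"
      define lam where "lam = eps c / eps b"
      have 1: "c - ga_scale lam b \<in> K"
        using MK c bG b(2) by (auto simp: eps_diff eps_scale lam_def)
      have 2: "ga_scale lam b \<in> K"
        using left_idealD(5)[OF K _ b(1), of "ga_scale lam (dl G \<one>)"] scale_as_cv[OF bG] by simp
      have "(c - ga_scale lam b) + ga_scale lam b \<in> K" using left_idealD(3)[OF K 1 2] .
      then show "c \<in> K" by simp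
    qed
    then show ?thesis using left_idealD(1)[OF K] by (auto simp: ga_simps)
  qed
  ultimately show ?thesis using MI by (auto simp: maximal_left_ideal_def)
qed

abbreviation "c1 \<equiv> dl G \<one> - eN"

lemma c1_central: "r \<in> GA G \<Longrightarrow> cv G c1 r = cv G r c1"
  by (simp add: cv_diff_left cv_diff_right cv_one_left cv_one_right eN_central)

lemma c1_idem: "cv G c1 c1 = c1"
  by (simp add: cv_diff_left cv_diff_right cv_one_left cv_one_right eN_idem)

lemma J_sub_VV:
  assumes a: "a \<in> GA G" and aM: "\<And>M. maximal_left_ideal AG M \<Longrightarrow> a \<in> M"
  shows "a \<in> VV"
proof -
  have ea: "eps a = 0" using aM[OF M0_max] by simp
  define W where "W = {v \<in> GA G. cv G c1 v = v \<and> (\<forall>M. maximal_left_ideal AG M \<longrightarrow> v \<in> M)}"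
  have MI: "\<And>M. maximal_left_ideal AG M \<Longrightarrow> left_ideal AG M" by (simp add: maximal_left_ideal_def)
  obtain d where dsum: "(\<Sum>g\<in>carrier G. cv G (cv G (dl G g) d) (dl G (inv g))) = c1"
    using dsum_exists by blast
  have Wz: "v = 0" if v: "v \<in> W" for v
  proof (rule sep_zero[OF finF _ _ _ _ _ _ dsum _ v])
    show "W \<subseteq> GA G" by (auto simp: W_def)
    show "0 \<in> W" using left_idealD(2)[OF MI] by (auto simp: W_def)
    show "p + q \<in> W" if "p \<in> W" "q \<in> W" for p q
      using that left_idealD(3)[OF MI] by (simp add: W_def cv_add_right) blast
    show "ga_scale c p \<in> W" if "p \<in> W" for c p
    proof -
      have pG: "p \<in> GA G" using that by (auto simp: W_def)
      have 1: "cv G c1 (ga_scale c p) = ga_scale c p" using that by (simp add: W_def cv_scale_right)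
      have 2: "ga_scale c p \<in> M" if M: "maximal_left_ideal AG M" for M
      proof -
        have "cv G (ga_scale c (dl G \<one>)) p \<in> M"
          using left_idealD(5)[OF MI[OF M], of "ga_scale c (dl G \<one>)" p] \<open>p \<in> W\<close> M by (simp add: W_def)
        then show ?thesis using scale_as_cv[OF pG] by simp
      qed
      show ?thesis using 1 2 pG by (simp add: W_def)
    qed
    show "cv G r p \<in> W" if r: "r \<in> GA G" and "p \<in> W" for r p
    proof -
      have "cv G c1 (cv G r p) = cv G r (cv G c1 p)"
        by (simp add: cv_assoc[symmetric] c1_central[OF r])
      moreover have "cv G r p \<in> M" if M: "maximal_left_ideal AG M" for M
        using left_idealD(5)[OF MI[OF M] r] \<open>p \<in> W\<close> M by (simp add: W_def)
      ultimately show ?thesis using \<open>p \<in> W\<close> by (simp add: W_def)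
    qed
    show "\<exists>u\<in>GA G. cv G u (dl G \<one> - v) = dl G \<one>" if "v \<in> W" for v
      using that quasi_regular[OF finF] by (auto simp: W_def)
    show "cv G c1 v = v" if "v \<in> W" for v using that by (auto simp: W_def)
  qed
  have "cv G c1 a \<in> M" if M: "maximal_left_ideal AG M" for M
    using left_idealD(5)[OF MI[OF M] _ aM[OF M], of c1] by simp
  then have "cv G c1 a \<in> W"
    by (auto simp: W_def cv_assoc[symmetric] c1_idem)
  then have "cv G c1 a = 0" by (rule Wz)
  then have "a = cv G eN a" using cv_one_left[OF a] by (simp add: cv_diff_left)
  then have "invN a" using invN_eN_cv by metis
  then show ?thesis using a ea by (simp add: VV_def)
qed

lemma J_eq: "jacobson_radical AG = VV"
proof
  show "jacobson_radical AG \<subseteq> VV"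
    using J_sub_VV by (auto simp: jacobson_radical_def ga_simps)
  have "VV \<subseteq> M" if "maximal_left_ideal AG M" for M
    by (rule nil_in_maximal[OF VV_GA VV_left VV_cube that])
  then show "VV \<subseteq> jacobson_radical AG"
    using VV_GA by (auto simp: jacobson_radical_def ga_simps)
qed

end


context tga begin

definition indG :: "'g \<Rightarrow> 'a" where "indG = (\<lambda>z. if z \<in> carrier G then 1 else 0)"

lemma cv_indG_right: "z \<in> carrier G \<Longrightarrow> cv G f indG z = eps f"
  by (simp add: cv_app indG_def eps_def)

lemma cv_indG_left: "z \<in> carrier G \<Longrightarrow> cv G indG f z = eps f"
proof -
  assume z: "z \<in> carrier G"
  have "cv G indG f z = (\<Sum>u\<in>carrier G. f (inv u \<otimes> z))"
    using z by (simp add: cv_app indG_def)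
  also have "\<dots> = eps f" using sum_invl[OF z] by (simp add: eps_def)
  finally show ?thesis .
qed

lemma Anh_eq:
  assumes ord_char: "\<And>z. z \<in> carrier G \<Longrightarrow> (\<exists>n::nat. group.ord G z = 3 ^ n) \<longleftrightarrow> (z = \<one> \<or> z \<notin> N)"
  shows "Anh G (s_elem G :: 'g \<Rightarrow> 'a) = VV"
proof -
  have s: "(s_elem G :: 'g \<Rightarrow> 'a) = dl G \<one> + (indG - eN)"
  proof
    fix z show "(s_elem G :: 'g \<Rightarrow> 'a) z = (dl G \<one> + (indG - eN)) z"
    proof (cases "z \<in> carrier G")
      case True then show ?thesis using ord_char[OF True]
        by (cases "z = \<one>") (auto simp: s_elem_def dl_def indG_def eN_def)
    next
      case False
      then have "z \<noteq> \<one>" "z \<notin> N" by auto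
      then show ?thesis using False by (simp add: s_elem_def dl_def indG_def eN_def)
    qed
  qed
  have R: "cv G f (s_elem G) z = f z + eps f - cv G f eN z" if f: "f \<in> GA G" and z: "z \<in> carrier G" for f z
    unfolding s by (simp add: cv_add_right cv_diff_right cv_one_right[OF f] cv_indG_right[OF z])
  have L: "cv G (s_elem G) f z = f z + eps f - cv G eN f z" if f: "f \<in> GA G" and z: "z \<in> carrier G" for f z
    unfolding s by (simp add: cv_add_left cv_diff_left cv_one_left[OF f] cv_indG_left[OF z])
  show ?thesis
  proof
    show "Anh G (s_elem G) \<subseteq> VV"
    proof
      fix f :: "'g \<Rightarrow> 'a" assume "f \<in> Anh G (s_elem G)"
      then have f: "f \<in> GA G" and fs: "cv G f (s_elem G) = 0" by (auto simp: Anh_def ga_simps)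
      have fz: "f z = cv G f eN z - eps f" if "z \<in> carrier G" for z
      proof -
        have "cv G f (s_elem G) z = 0" using fs by simp
        then have "f z + eps f - cv G f eN z = 0" using R[OF f that] by simp
        then show ?thesis by (simp add: algebra_simps)
      qed
      have fi: "invN f"
        unfolding invN_def
      proof (intro ballI)
        fix n g assume n: "n \<in> N" and g: "g \<in> carrier G"
        show "f (n \<otimes> g) = f g"
          using fz[of "n \<otimes> g"] fz[of g] invN_cv_eN[of f] n g by (simp add: invN_def)
      qed
      have "cv G f eN = f" using cv_eN_invN[OF f fi] eN_central by simp
      then have "eps f = 0" using fz[of \<one>] by simp
      then show "f \<in> VV" using f fi by (simp add: VV_def)
    qed
    show "VV \<subseteq> Anh G (s_elem G)"
    proof
      fix f :: "'g \<Rightarrow> 'a" assume fV: "f \<in> VV"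
      then have f: "f \<in> GA G" and fi: "invN f" and fe: "eps f = 0" by (auto simp: VV_def)
      have e1: "cv G eN f = f" by (rule cv_eN_invN[OF f fi])
      have e2: "cv G f eN = f" using e1 eN_central by simp
      have "cv G f (s_elem G) = 0"
      proof
        fix z show "cv G f (s_elem G) z = 0 z"
          by (cases "z \<in> carrier G") (simp_all add: R[OF f] e2 fe cv_out)
      qed
      moreover have "cv G (s_elem G) f = 0"
      proof
        fix z show "cv G (s_elem G) f z = 0 z"
          by (cases "z \<in> carrier G") (simp_all add: L[OF f] e1 fe cv_out)
      qed
      ultimately show "f \<in> Anh G (s_elem G)" using f by (simp add: Anh_def ga_simps)
    qed
  qed
qed

definition C1 :: "'g \<Rightarrow> 'a" where "C1 = (\<lambda>z. if z \<in> carrier G \<and> z \<otimes> (y \<otimes> y) \<in> N then 1 else 0)"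
definition C2 :: "'g \<Rightarrow> 'a" where "C2 = (\<lambda>z. if z \<in> carrier G \<and> z \<otimes> y \<in> N then 1 else 0)"
definition w1 :: "'g \<Rightarrow> 'a" where "w1 = eN - C1"
definition w2 :: "'g \<Rightarrow> 'a" where "w2 = eN - C2"

lemma yyy: "y \<otimes> (y \<otimes> y) = \<one>" using y3 y_in by (simp add: m_assoc)
lemma yyyy: "y \<otimes> y \<otimes> (y \<otimes> y) = y" using y3 y_in by (simp add: m_assoc[symmetric])

lemma C1_vals: "C1 \<one> = 0" "C1 y = 1" "C1 (y \<otimes> y) = 0"
  using yy_notin y_notin y_in by (simp_all add: C1_def yyy yyyy)
lemma C2_vals: "C2 \<one> = 0" "C2 y = 0" "C2 (y \<otimes> y) = 1"
  using yy_notin y_notin y_in y3 by (simp_all add: C2_def)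
lemma eN_vals: "eN \<one> = 1" "eN y = 0" "eN (y \<otimes> y) = 0"
  using yy_notin y_notin by (simp_all add: eN_def)

lemma invN_C1: "invN C1"
  unfolding invN_def C1_def using coset_eq_iff y_in by (auto simp: m_assoc)
lemma invN_C2: "invN C2"
  unfolding invN_def C2_def using coset_eq_iff y_in by (auto simp: m_assoc)
lemma invN_lin: "invN a \<Longrightarrow> invN b \<Longrightarrow> invN (ga_scale c a + ga_scale d b)"
  by (simp add: invN_def ga_scale_def)
lemma invN_diff: "invN a \<Longrightarrow> invN b \<Longrightarrow> invN (a - b)"
  by (simp add: invN_def)

lemma w1_vals: "w1 \<one> = 1" "w1 y = -1" "w1 (y \<otimes> y) = 0"
  by (simp_all add: w1_def C1_vals eN_vals)
lemma w2_vals: "w2 \<one> = 1" "w2 y = 0" "w2 (y \<otimes> y) = -1"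
  by (simp_all add: w2_def C2_vals eN_vals)

lemma C_GA: "C1 \<in> GA G" "C2 \<in> GA G" by (auto simp: GA_def C1_def C2_def)

lemma w_VV: "w1 \<in> VV" "w2 \<in> VV"
proof -
  have i1: "invN w1" unfolding w1_def by (rule invN_diff[OF invN_eN invN_C1])
  have i2: "invN w2" unfolding w2_def by (rule invN_diff[OF invN_eN invN_C2])
  show "w1 \<in> VV" using i1 eps_invN[OF i1] C_GA by (simp add: VV_def w1_def C1_vals eN_vals)
  show "w2 \<in> VV" using i2 eps_invN[OF i2] C_GA by (simp add: VV_def w2_def C2_vals eN_vals)
qed

lemma VV_repr: "f \<in> VV \<Longrightarrow> f = ga_scale (- f y) w1 + ga_scale (- f (y \<otimes> y)) w2"
proof -
  assume fV: "f \<in> VV"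
  then have f: "f \<in> GA G" and fi: "invN f" and fe: "eps f = 0" by (auto simp: VV_def)
  have wi: "invN w1" "invN w2" "w1 \<in> GA G" "w2 \<in> GA G" using w_VV by (auto simp: VV_def)
  let ?D = "f - (ga_scale (- f y) w1 + ga_scale (- f (y \<otimes> y)) w2)"
  have "?D = 0"
  proof (rule invN_zero)
    show "?D \<in> GA G" using f wi by simp
    show "invN ?D" by (rule invN_diff[OF fi invN_lin[OF wi(1,2)]])
    have "f \<one> + f y + f (y \<otimes> y) = 0" using fe eps_invN[OF fi] by simp
    then show "?D \<one> = 0" by (simp add: ga_scale_def w1_vals w2_vals algebra_simps)
    show "?D y = 0" by (simp add: ga_scale_def w1_vals w2_vals)
    show "?D (y \<otimes> y) = 0" by (simp add: ga_scale_def w1_vals w2_vals)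
  qed
  then show ?thesis by simp
qed

lemma dim_VV: "dim_F VV = 2"
proof -
  interpret vs: vector_space "ga_scale :: 'a \<Rightarrow> ('g \<Rightarrow> 'a) \<Rightarrow> ('g \<Rightarrow> 'a)" by (rule vs_ga)
  have sub: "vs.subspace VV"
  proof (rule vs.subspaceI)
    show "0 \<in> VV" by (simp add: VV_def invN_def eps_zero)
    show "a + b \<in> VV" if "a \<in> VV" "b \<in> VV" for a b
      using that by (simp add: VV_def invN_def eps_add)
    show "ga_scale c a \<in> VV" if "a \<in> VV" for c a
    proof -
      have "ga_scale c a \<in> GA G" using that by (simp add: VV_def)
      moreover have "eps (ga_scale c a) = 0" using that by (simp add: VV_def eps_scale)
      moreover have "invN (ga_scale c a)" using that by (simp add: VV_def invN_def ga_scale_def)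
      ultimately show ?thesis by (simp add: VV_def)
    qed
  qed
  have sp: "vs.span {w1, w2} = VV"
  proof
    show "vs.span {w1, w2} \<subseteq> VV" using w_VV sub by (intro vs.span_minimal) auto
    show "VV \<subseteq> vs.span {w1, w2}"
    proof
      fix f assume "f \<in> VV"
      then have "f = ga_scale (- f y) w1 + ga_scale (- f (y \<otimes> y)) w2" by (rule VV_repr)
      moreover have "ga_scale (- f y) w1 + ga_scale (- f (y \<otimes> y)) w2 \<in> vs.span {w1, w2}"
        by (intro vs.span_add vs.span_scale vs.span_base) auto
      ultimately show "f \<in> vs.span {w1, w2}" by simp
    qed
  qed
  have ne: "w1 \<noteq> w2" using w1_vals(2) w2_vals(2) by auto
  have w2nz: "w2 \<noteq> 0" using w2_vals(3) by auto
  have ind2: "vs.independent {w2}"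
    using w2nz by (simp add: vs.independent_insert vs.span_empty)
  have "w1 \<notin> vs.span {w2}"
  proof
    assume "w1 \<in> vs.span {w2}"
    then obtain k where "w1 = ga_scale k w2" by (auto simp: vs.span_singleton)
    then have "w1 y = k * w2 y" by (simp add: ga_scale_def)
    then show False using w1_vals(2) w2_vals(2) by simp
  qed
  then have ind: "vs.independent {w1, w2}"
    using ind2 ne by (simp add: vs.independent_insert)
  have "dim_F VV = vs.dim VV" by (simp add: dim_F_def)
  also have "\<dots> = vs.dim (vs.span {w1, w2})" using sp by simp
  also have "\<dots> = card {w1, w2}" using vs.dim_span_eq_card_independent[OF ind] .
  also have "\<dots> = 2" using ne by simp
  finally show ?thesis .
qed

end


context group begin

lemma gcanc1: "h \<in> carrier G \<Longrightarrow> z \<in> carrier G \<Longrightarrow> inv h \<otimes> (h \<otimes> z) = z"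
  by (simp add: m_assoc[symmetric])
lemma gcanc2: "h \<in> carrier G \<Longrightarrow> z \<in> carrier G \<Longrightarrow> h \<otimes> (inv h \<otimes> z) = z"
  by (simp add: m_assoc[symmetric])

lemma t3m_tg:
  fixes x y :: 'a and k m :: nat and t :: int
  assumes m_def: "m = 3 * k + 1"
    and t_cube: "[t ^ 3 = 1] (mod int m)"
    and t_gcd: "gcd (int m) (t - 1) = 1"
    and xy_in: "x \<in> carrier G" "y \<in> carrier G"
    and G_gen: "generate G {x, y} = carrier G"
    and rel_x: "x [^]\<^bsub>G\<^esub> m = \<one>\<^bsub>G\<^esub>"
    and rel_y: "y [^]\<^bsub>G\<^esub> (3::nat) = \<one>\<^bsub>G\<^esub>"
    and rel_xy: "inv\<^bsub>G\<^esub> y \<otimes>\<^bsub>G\<^esub> x \<otimes>\<^bsub>G\<^esub> y = x [^]\<^bsub>G\<^esub> t"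
    and G_order: "card (carrier G) = 3 * m"
  shows "tg G ((\<lambda>i::nat. x [^]\<^bsub>G\<^esub> i) ` {..<m}) y \<and> card ((\<lambda>i::nat. x [^]\<^bsub>G\<^esub> i) ` {..<m}) = m"
proof -
  have m0: "m > 0" using m_def by simp
  have fin: "finite (carrier G)" using G_order m0 by (intro card_ge_0_finite) simp
  interpret fgrp G by unfold_locales (rule fin)
  define N where "N = (\<lambda>i::nat. x [^] i) ` {..<m}"
  have x: "x \<in> carrier G" and y: "y \<in> carrier G" using xy_in by auto
  have xmod: "x [^] (i::nat) = x [^] (i mod m)" for i
  proof -
    have "x [^] i = x [^] (m * (i div m) + i mod m)" by simp
    also have "\<dots> = (x [^] m) [^] (i div m) \<otimes> x [^] (i mod m)"
      using x by (simp add: nat_pow_mult nat_pow_pow)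
    also have "\<dots> = x [^] (i mod m)" using rel_x x by simp
    finally show ?thesis .
  qed
  have xN: "x [^] (i::nat) \<in> N" for i
    unfolding N_def using xmod[of i] m0 by auto
  have NE: "n \<in> N \<Longrightarrow> \<exists>i. n = x [^] (i::nat)" for n unfolding N_def by auto
  define \<tau> where "\<tau> = nat (t mod int m)"
  have tau_int: "int \<tau> = t mod int m" using m0 by (simp add: \<tau>_def)
  have xt: "x [^] t = x [^] \<tau>"
  proof -
    have "x [^] t = x [^] (int m * (t div int m) + t mod int m)" by simp
    also have "\<dots> = x [^] (int m * (t div int m)) \<otimes> x [^] (t mod int m)"
      using x by (rule int_pow_mult)
    also have "x [^] (int m * (t div int m)) = \<one>"
      using x rel_x by (simp add: int_pow_pow[symmetric] int_pow_int)
    also have "x [^] (t mod int m) = x [^] \<tau>"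
      using m0 by (simp add: \<tau>_def pow_nat)
    finally show ?thesis using x by simp
  qed
  have conj_x: "inv y \<otimes> x \<otimes> y = x [^] \<tau>" using rel_xy xt by simp
  have conj_pow: "inv y \<otimes> x [^] (i::nat) \<otimes> y = x [^] (\<tau> * i)" for i
  proof (induction i)
    case 0 then show ?case using y by simp
  next
    case (Suc i)
    have "inv y \<otimes> x [^] Suc i \<otimes> y = (inv y \<otimes> x [^] i \<otimes> y) \<otimes> (inv y \<otimes> x \<otimes> y)"
      using x y by (simp add: m_assoc gcanc1 gcanc2)
    also have "\<dots> = x [^] (\<tau> * i) \<otimes> x [^] \<tau>" using Suc conj_x by simp
    also have "\<dots> = x [^] (\<tau> * Suc i)" using x by (simp add: nat_pow_mult add.commute)
    finally show ?case .
  qed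
  have y3: "y \<otimes> y \<otimes> y = \<one>" using rel_y y by (simp add: numeral_3_eq_3)
  have inv_y: "inv y = y \<otimes> y" using inv_equality[of "y \<otimes> y" y] y3 y by simp
  have inv_inv_y: "inv y \<otimes> inv y = y" using inv_y y y3 by (simp add: m_assoc)
  have conjN: "inv y \<otimes> n \<otimes> y \<in> N" if nN: "n \<in> N" for n
  proof -
    obtain i where "n = x [^] (i::nat)" using NE[OF nN] by blast
    then show ?thesis using conj_pow[of i] xN[of "\<tau> * i"] by simp
  qed
  have conjN': "n \<in> N \<Longrightarrow> y \<otimes> n \<otimes> inv y \<in> N" for n
  proof -
    assume n: "n \<in> N"
    have nG: "n \<in> carrier G" using n x unfolding N_def by auto
    have "inv y \<otimes> (inv y \<otimes> n \<otimes> y) \<otimes> y = (inv y \<otimes> inv y) \<otimes> n \<otimes> (y \<otimes> y)"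
      using nG y by (simp add: m_assoc)
    also have "\<dots> = y \<otimes> n \<otimes> (y \<otimes> y)" by (simp only: inv_inv_y)
    also have "\<dots> = y \<otimes> n \<otimes> inv y" by (simp only: inv_y)
    finally have "y \<otimes> n \<otimes> inv y = inv y \<otimes> (inv y \<otimes> n \<otimes> y) \<otimes> y" by simp
    then show ?thesis using conjN[OF conjN[OF n]] by simp
  qed
  have NG: "N \<subseteq> carrier G" unfolding N_def using x by auto
  have ypconj: "n \<in> N \<Longrightarrow> y [^] (a::nat) \<otimes> n \<otimes> inv (y [^] a) \<in> N" for n a
  proof (induction a arbitrary: n)
    case 0 then show ?case using NG by auto
  next
    case (Suc a)
    have nG: "n \<in> carrier G" using Suc NG by auto
    have "y [^] Suc a \<otimes> n \<otimes> inv (y [^] Suc a) = y [^] a \<otimes> (y \<otimes> n \<otimes> inv y) \<otimes> inv (y [^] a)"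
      using y nG by (simp add: m_assoc inv_mult_group)
    then show ?case using Suc.IH[OF conjN'[OF Suc.prems]] by simp
  qed
  have ypconj': "n \<in> N \<Longrightarrow> inv (y [^] (a::nat)) \<otimes> n \<otimes> y [^] a \<in> N" for n a
  proof (induction a arbitrary: n)
    case 0 then show ?case using NG by auto
  next
    case (Suc a)
    have nG: "n \<in> carrier G" using Suc NG by auto
    have "inv (y [^] Suc a) \<otimes> n \<otimes> y [^] Suc a = inv y \<otimes> (inv (y [^] a) \<otimes> n \<otimes> y [^] a) \<otimes> y"
      using y nG by (simp add: m_assoc inv_mult_group)
    then show ?case using conjN[OF Suc.IH[OF Suc.prems]] by simp
  qed
  have ymod: "y [^] (j::nat) = y [^] (j mod 3)" for j
  proof -
    have "y [^] j = y [^] (3 * (j div 3) + j mod 3)" by simp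
    also have "\<dots> = (y [^] (3::nat)) [^] (j div 3) \<otimes> y [^] (j mod 3)"
      using y by (simp add: nat_pow_mult nat_pow_pow)
    also have "\<dots> = y [^] (j mod 3)" using rel_y y by simp
    finally show ?thesis .
  qed
  have N_mult: "a \<otimes> b \<in> N" if ha: "a \<in> N" and hb: "b \<in> N" for a b
  proof -
    obtain i j where "a = x [^] (i::nat)" "b = x [^] (j::nat)" using NE[OF ha] NE[OF hb] by blast
    then show ?thesis using xN[of "i + j"] x by (simp add: nat_pow_mult)
  qed
  have N_comm: "a \<otimes> b = b \<otimes> a" if ha: "a \<in> N" and hb: "b \<in> N" for a b
  proof -
    obtain i j where "a = x [^] (i::nat)" "b = x [^] (j::nat)" using NE[OF ha] NE[OF hb] by blast
    then show ?thesis using x by (simp add: nat_pow_mult add.commute)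
  qed
  have N_inv: "a \<in> N \<Longrightarrow> inv a \<in> N" for a
  proof -
    assume "a \<in> N"
    then obtain i where i: "a = x [^] (i::nat)" using NE by blast
    have "x [^] ((m - 1) * i) \<otimes> x [^] i = x [^] (m * i)"
      using x m0 by (simp add: nat_pow_mult algebra_simps)
    also have "\<dots> = \<one>" using rel_x x by (simp add: nat_pow_pow[symmetric])
    finally have "inv (x [^] i) = x [^] ((m - 1) * i)" using x by (intro inv_equality) auto
    then show ?thesis using i xN by simp
  qed
  have one_N: "\<one> \<in> N" using xN[of 0] by simp
  let ?S = "{n \<otimes> y [^] j | n j. n \<in> N \<and> j < (3::nat)}"
  have S_mult: "a \<in> ?S \<Longrightarrow> b \<in> ?S \<Longrightarrow> a \<otimes> b \<in> ?S" for a b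
  proof -
    assume "a \<in> ?S" "b \<in> ?S"
    then obtain n j n' j' where a: "a = n \<otimes> y [^] j" "n \<in> N" "j < (3::nat)"
      and b: "b = n' \<otimes> y [^] j'" "n' \<in> N" "j' < (3::nat)" by blast
    have G: "n \<in> carrier G" "n' \<in> carrier G" using a b NG by auto
    have "a \<otimes> b = (n \<otimes> (y [^] j \<otimes> n' \<otimes> inv (y [^] j))) \<otimes> y [^] (j + j')"
      using a b G y by (simp add: m_assoc nat_pow_mult[symmetric] gcanc1)
    also have "\<dots> = (n \<otimes> (y [^] j \<otimes> n' \<otimes> inv (y [^] j))) \<otimes> y [^] ((j + j') mod 3)"
      using ymod by metis
    finally show "a \<otimes> b \<in> ?S" using N_mult[OF a(2) ypconj[OF b(2)]] by fastforce
  qed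
  have SI: "n \<otimes> y [^] j \<in> ?S" if "n \<in> N" "j < (3::nat)" for n j
    using that by blast
  have GS: "carrier G \<subseteq> ?S"
  proof
    fix g assume "g \<in> carrier G"
    then have "g \<in> generate G {x, y}" using G_gen by simp
    then show "g \<in> ?S"
    proof (induction rule: generate.induct)
      case one
      show ?case using SI[OF one_N, of 0] by simp
    next
      case (incl h)
      have "x \<in> N" using xN[of 1] x by simp
      then have "x \<in> ?S" "y \<in> ?S" using SI[of x 0] SI[OF one_N, of 1] x y by auto
      then show ?case using incl by auto
    next
      case (inv h)
      have "inv x \<in> N" using N_inv xN[of 1] x by simp
      then have "inv x \<in> ?S" "inv y \<in> ?S" using SI[of "inv x" 0] SI[OF one_N, of 2] x y inv_y
        by (auto simp: numeral_2_eq_2)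
      then show ?case using inv by auto
    next
      case (eng h1 h2)
      then show ?case using S_mult by blast
    qed
  qed
  define f where "f = (\<lambda>(n, j). n \<otimes> y [^] (j::nat))"
  have fim: "f ` (N \<times> {..<3}) = carrier G"
  proof
    show "f ` (N \<times> {..<3}) \<subseteq> carrier G" using NG y by (auto simp: f_def)
    show "carrier G \<subseteq> f ` (N \<times> {..<3})"
      using GS by (force simp: f_def image_iff)
  qed
  have finN: "finite N" unfolding N_def by simp
  have cN: "card N \<le> m" unfolding N_def using card_image_le[of "{..<m}"] by simp
  have cprod: "card (N \<times> {..<3::nat}) = card N * 3" by (simp add: card_cartesian_product)
  have "3 * m \<le> card N * 3"
    using G_order fim card_image_le[of "N \<times> {..<3::nat}" f] finN cprod by simp
  then have cardN: "card N = m" using cN by simp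
  have injf: "inj_on f (N \<times> {..<3})"
    by (rule eq_card_imp_inj_on) (use finN fim G_order cardN cprod in auto)
  have decomp: "bij_betw (\<lambda>(n, j). n \<otimes> y [^] j) (N \<times> {..<3::nat}) (carrier G)"
    using injf fim unfolding f_def bij_betw_def by simp
  have injx: "inj_on (\<lambda>i::nat. x [^] i) {..<m}"
    by (rule eq_card_imp_inj_on) (use cardN in \<open>auto simp: N_def\<close>)
  have N_sub: "subgroup N G"
    by (rule subgroupI) (use NG one_N N_inv N_mult in auto)
  have N_norm: "inv g \<otimes> n \<otimes> g \<in> N" if g: "g \<in> carrier G" and n: "n \<in> N" for g n
  proof -
    obtain a j where a: "a \<in> N" "g = a \<otimes> y [^] (j::nat)" using GS g by blast
    have aG: "a \<in> carrier G" "n \<in> carrier G" using a n NG by auto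
    have "inv g \<otimes> n \<otimes> g = inv (y [^] j) \<otimes> (inv a \<otimes> n \<otimes> a) \<otimes> y [^] j"
      using a aG y by (simp add: inv_mult_group m_assoc)
    also have "inv a \<otimes> n \<otimes> a = n"
      using N_comm[OF N_inv[OF a(1)] n] aG by (simp add: m_assoc)
    finally show ?thesis using ypconj'[OF n] by simp
  qed
  have fpf: "n = \<one>" if n: "n \<in> N" and fix_n: "inv y \<otimes> n \<otimes> y = n" for n
  proof -
    obtain i where i: "i < m" "n = x [^] i" using n unfolding N_def by blast
    have "x [^] ((\<tau> * i) mod m) = x [^] i" using conj_pow[of i] fix_n i xmod by metis
    then have eq: "(\<tau> * i) mod m = i" using injx i(1) m0 by (auto simp: inj_on_def)
    have "int m dvd int (\<tau> * i) - int i"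
      using eq by (metis mod_mod_trivial of_nat_mod mod_eq_dvd_iff)
    then have "int m dvd (int \<tau> - 1) * int i" by (simp add: algebra_simps)
    moreover have tm: "t mod int m = t - int m * (t div int m)" by (metis minus_mult_div_eq_mod)
    ultimately have "int m dvd (t - 1) * int i - int m * ((t div int m) * int i)"
      using tau_int by (simp add: algebra_simps)
    then have "int m dvd ((t - 1) * int i - int m * ((t div int m) * int i)) + int m * ((t div int m) * int i)"
      by (rule dvd_add) simp
    then have "int m dvd (t - 1) * int i" by simp
    moreover have "coprime (int m) (t - 1)" using t_gcd by (simp add: coprime_iff_gcd_eq_1)
    ultimately have "int m dvd int i" using coprime_dvd_mult_right_iff by blast
    then have "m dvd i" by simp
    then have "i = 0" using i(1) by (metis dvd_imp_le not_less neq0_conv)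
    then show ?thesis using i by simp
  qed
  have "tg G N y"
  proof (rule tg.intro)
    show "fgrp G" by (rule fgrp_axioms)
    show "tg_axioms G N y"
      by (rule tg_axioms.intro) (use N_sub N_norm N_comm y y3 decomp fpf in auto)
  qed
  then show ?thesis using cardN N_def by simp
qed

end



context tga begin

lemma coset_mult: "a \<in> N \<Longrightarrow> b \<in> N \<Longrightarrow> g \<in> carrier G \<Longrightarrow> h \<in> carrier G \<Longrightarrow>
    (a \<otimes> g) \<otimes> (b \<otimes> h) = (a \<otimes> (g \<otimes> b \<otimes> inv g)) \<otimes> (g \<otimes> h)"
  by (simp add: m_assoc)

lemma cube_outside:
  assumes z: "z \<in> carrier G" and zN: "z \<notin> N"
  shows "z \<otimes> z \<otimes> z = \<one>"
proof -
  obtain a where a: "a \<in> N" "z = a \<or> z = a \<otimes> y \<or> z = a \<otimes> (y \<otimes> y)" using decomp_ex[OF z] by blast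
  obtain h where h: "h = y \<or> h = y \<otimes> y" and zh: "z = a \<otimes> h" using a zN by blast
  have hG: "h \<in> carrier G" using h y_in by auto
  have h3: "h \<otimes> h \<otimes> h = \<one>"
    using h y3 y_in yyy by (auto simp: m_assoc)
  have aG: "a \<in> carrier G" using a by simp
  define c where "c = a \<otimes> (h \<otimes> a \<otimes> inv h)"
  have cN: "c \<in> N" using a N_norm'[OF hG a(1)] by (simp add: c_def)
  have zz: "z \<otimes> z = c \<otimes> (h \<otimes> h)" unfolding zh c_def using coset_mult[OF a(1) a(1) hG hG] .
  define c' where "c' = c \<otimes> ((h \<otimes> h) \<otimes> a \<otimes> inv (h \<otimes> h))"
  have c'N: "c' \<in> N" using cN N_norm'[of "h \<otimes> h" a] a hG by (simp add: c'_def)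
  have "z \<otimes> z \<otimes> z = c' \<otimes> (h \<otimes> h \<otimes> h)"
    unfolding zz c'_def using coset_mult[OF cN a(1), of "h \<otimes> h" h] hG zh by simp
  then have w: "z \<otimes> z \<otimes> z = c'" using h3 c'N by simp
  have "inv z \<otimes> c' \<otimes> z = c'" unfolding w[symmetric] using z by (simp add: m_assoc)
  moreover have "inv z \<otimes> c' \<otimes> z = inv h \<otimes> (inv a \<otimes> c' \<otimes> a) \<otimes> h"
    unfolding zh using aG hG c'N by (simp add: inv_mult_group m_assoc)
  ultimately have fix_c: "inv h \<otimes> c' \<otimes> h = c'" using inv_conj_N[OF a(1) c'N] by simp
  have "c' = \<one>"
  proof (cases "h = y")
    case True then show ?thesis using fpf[OF c'N] fix_c by simp
  next
    case False
    then have hyy: "h = y \<otimes> y" using h by blast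
    have "sig (sig c') = inv h \<otimes> c' \<otimes> h"
      unfolding hyy sig_def using c'N y_in by (simp add: inv_mult_group m_assoc)
    then have ss: "sig (sig c') = c'" using fix_c by simp
    have "sig c' = sig (sig (sig c'))" using ss by simp
    also have "\<dots> = c'" by (rule sig3[OF c'N])
    finally show ?thesis using fpf[OF c'N] by (simp add: sig_def)
  qed
  then show ?thesis using w by simp
qed

lemma ord_char:
  assumes pw: "\<And>n. n \<in> N \<Longrightarrow> n [^] card N = \<one>" and cm: "card N mod 3 = 1"
    and z: "z \<in> carrier G"
  shows "(\<exists>a::nat. group.ord G z = 3 ^ a) \<longleftrightarrow> (z = \<one> \<or> z \<notin> N)"
proof (cases "z \<in> N")
  case True
  have d: "group.ord G z dvd card N" using pw[OF True] pow_eq_id[OF z] by simp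
  show ?thesis
  proof
    assume "\<exists>a::nat. group.ord G z = 3 ^ a"
    then obtain a :: nat where a: "group.ord G z = 3 ^ a" by blast
    have "a = 0"
    proof (rule ccontr)
      assume "a \<noteq> 0"
      then have "3 dvd group.ord G z" using a by (simp add: dvd_power)
      then have "3 dvd card N" using d dvd_trans by blast
      then show False using cm by simp
    qed
    then have "group.ord G z = 1" using a by simp
    then show "z = \<one> \<or> z \<notin> N" using ord_eq_1[OF z] by simp
  next
    assume "z = \<one> \<or> z \<notin> N"
    then have "z = \<one>" using True by simp
    then have "group.ord G z = 3 ^ 0" by simp
    then show "\<exists>a::nat. group.ord G z = 3 ^ a" by blast
  qed
next
  case False
  have "z [^] (3::nat) = \<one>" using cube_outside[OF z False] z by (simp add: numeral_3_eq_3)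
  then have d: "group.ord G z dvd 3" using pow_eq_id[OF z] by simp
  have "z \<noteq> \<one>" using False by auto
  then have "group.ord G z \<noteq> 1" using ord_eq_1[OF z] by simp
  moreover have "group.ord G z \<noteq> 0" using d by (metis dvd_0_left_iff zero_neq_numeral)
  moreover have "group.ord G z \<le> 3" using d by (rule dvd_imp_le) simp
  ultimately have "group.ord G z = 2 \<or> group.ord G z = 3" by auto
  then have "group.ord G z = 3" using d by auto
  then have "group.ord G z = 3 ^ 1" by simp
  then show ?thesis using False by blast
qed

end

theorem proposition3p6:
  fixes G :: "('g, 'n) monoid_scheme" and x y :: 'g
    and k :: nat and m :: nat and t :: int
  assumes F_finite: "finite (UNIV :: 'a::field set)"
    and F_char: "CHAR('a) = 3"
    and m_def: "m = 3 * k + 1"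
    and t_cube: "[t ^ 3 = 1] (mod int m)"
    and t_gcd: "gcd (int m) (t - 1) = 1"
    and G_group: "group G"
    and xy_in: "x \<in> carrier G" "y \<in> carrier G"
    and G_gen: "generate G {x, y} = carrier G"
    and rel_x: "x [^]\<^bsub>G\<^esub> m = \<one>\<^bsub>G\<^esub>"
    and rel_y: "y [^]\<^bsub>G\<^esub> (3::nat) = \<one>\<^bsub>G\<^esub>"
    and rel_xy: "inv\<^bsub>G\<^esub> y \<otimes>\<^bsub>G\<^esub> x \<otimes>\<^bsub>G\<^esub> y = x [^]\<^bsub>G\<^esub> t"
    and G_order: "card (carrier G) = 3 * m"
  shows "dim_F (jacobson_radical (group_algebra G :: ('g \<Rightarrow> 'a) ring)) = 2
       \<and> dim_F (Anh G (s_elem G :: 'g \<Rightarrow> 'a)) = 2"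
proof -
  define N where "N = (\<lambda>i::nat. x [^]\<^bsub>G\<^esub> i) ` {..<m}"
  have TG: "tg G N y" and cardN: "card N = m"
    using group.t3m_tg[OF G_group m_def t_cube t_gcd xy_in G_gen rel_x rel_y rel_xy G_order]
    unfolding N_def by auto
  interpret tg G N y by (rule TG)
  have three: "(3::'a) = 0" using of_nat_CHAR[where 'a='a] F_char by simp
  have c1: "(of_nat (card N) :: 'a) = 1"
  proof -
    have "(of_nat (card N) :: 'a) = of_nat 3 * of_nat k + 1" using cardN m_def by simp
    then show ?thesis using three by simp
  qed
  interpret A: tga G N y "TYPE('a)"
    by (rule tga.intro[OF TG]) (unfold_locales, use F_finite three c1 in auto)
  have pw: "n [^]\<^bsub>G\<^esub> card N = \<one>\<^bsub>G\<^esub>" if nN: "n \<in> N" for n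
  proof -
    obtain i where i: "n = x [^]\<^bsub>G\<^esub> (i::nat)" using nN by (auto simp: N_def)
    have "n [^]\<^bsub>G\<^esub> card N = (x [^]\<^bsub>G\<^esub> m) [^]\<^bsub>G\<^esub> i"
      using xy_in cardN by (simp add: i nat_pow_pow mult.commute)
    then show ?thesis using rel_x by simp
  qed
  have cm: "card N mod 3 = 1" using cardN m_def by simp
  have "jacobson_radical (group_algebra G :: ('g \<Rightarrow> 'a) ring) = A.VV" by (rule A.J_eq)
  moreover have "Anh G (s_elem G :: 'g \<Rightarrow> 'a) = A.VV"
    by (rule A.Anh_eq) (rule A.ord_char[OF pw cm])
  ultimately show ?thesis using A.dim_VV by simp
qed


end
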